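(* If for every nonzero nonunit $x$ of $D$ the ideal $xD$ is a $\ast$-product of finitely many $\ast$-f-homog ideals, then $D$ is a GCD domain that is a $\ast$-IRKT, and every nonzero nonunit of $D$ is expressible, uniquely up to order and associates, as a product of mutually $\ast$-comaximal $\ast$-f-homog elements. Conversely, if $D$ is a GCD domain that is a $\ast$-IRKT, then every proper nonzero principal ideal of $D$ is a $\ast$-product of finitely many $\ast$-f-homog ideals.
   Context: $\ast$ is a star operation on the integral domain $D$ of finite character. A $\ast$-ideal is a nonzero fractional ideal $I$ with $I^\ast=I$; of finite type if $I=J^\ast$ for some nonzero finitely generated $J$. A maximal $\ast$-ideal is an integral $\ast$-ideal maximal among proper integral $\ast$-ideals. Ideals $A,B$ are $\ast$-comaximal if $(A+B)^\ast=D$. A $\ast$-homog ideal is a proper integral $\ast$-ideal $I$ of finite type such that $(A+B)^\ast\neq D$ for every pair $A,B$ of proper integral $\ast$-ideals of finite type containing $I$. A $\ast$-f-homog ideal is a $\ast$-homog ideal $I$ such that every $\ast$-ideal of finite type containing $I$ (including $I$ itself) is principal; a $\ast$-f-homog element is a generator of a $\ast$-f-homog ideal. $D$ is a $\ast$-IRKT if $D_P$ is a valuation domain for every maximal $\ast$-ideal $P$, $D=\bigcap_P D_P$ over the maximal $\ast$-ideals with the intersection locally finite, and no two distinct maximal $\ast$-ideals contain a common nonzero prime ideal. *)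

theory Defs
  imports Main
begin

text \<open>Setting: the integral domain D is a subring of a field K (the type 'k) that is
  the quotient field of D.  Fractional ideals are subsets of K.\<close>

definition domain_in :: "'k::field set \<Rightarrow> bool" where
  "domain_in D \<longleftrightarrow> 0 \<in> D \<and> 1 \<in> D \<and>
     (\<forall>a\<in>D. \<forall>b\<in>D. a + b \<in> D \<and> a - b \<in> D \<and> a * b \<in> D) \<and>
     (\<forall>z. \<exists>a\<in>D. \<exists>b\<in>D. b \<noteq> 0 \<and> z = a / b)"

definition smul :: "'k::field \<Rightarrow> 'k set \<Rightarrow> 'k set" where
  "smul x I = (\<lambda>y. x * y) ` I"

definition ddvd :: "'k::field set \<Rightarrow> 'k \<Rightarrow> 'k \<Rightarrow> bool" where
  "ddvd D a b \<longleftrightarrow> (\<exists>k\<in>D. b = a * k)"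

definition dunit :: "'k::field set \<Rightarrow> 'k \<Rightarrow> bool" where
  "dunit D x \<longleftrightarrow> x \<in> D \<and> x \<noteq> 0 \<and> inverse x \<in> D"

definition dassoc :: "'k::field set \<Rightarrow> 'k \<Rightarrow> 'k \<Rightarrow> bool" where
  "dassoc D x y \<longleftrightarrow> (\<exists>u. dunit D u \<and> y = u * x)"

definition dspan :: "'k::field set \<Rightarrow> 'k set \<Rightarrow> 'k set" where
  "dspan D S = {y. \<exists>F c. finite F \<and> F \<subseteq> S \<and> (\<forall>s\<in>F. c s \<in> D) \<and> y = (\<Sum>s\<in>F. c s * s)}"

definition dsubmodule :: "'k::field set \<Rightarrow> 'k set \<Rightarrow> bool" where
  "dsubmodule D I \<longleftrightarrow> 0 \<in> I \<and> (\<forall>a\<in>I. \<forall>b\<in>I. a + b \<in> I) \<and> (\<forall>d\<in>D. \<forall>a\<in>I. d * a \<in> I)"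

definition frac_ideal :: "'k::field set \<Rightarrow> 'k set \<Rightarrow> bool" where
  "frac_ideal D I \<longleftrightarrow> dsubmodule D I \<and> I \<noteq> {0} \<and> (\<exists>d\<in>D. d \<noteq> 0 \<and> smul d I \<subseteq> D)"

definition fin_gen :: "'k::field set \<Rightarrow> 'k set \<Rightarrow> bool" where
  "fin_gen D J \<longleftrightarrow> (\<exists>F. finite F \<and> J = dspan D F)"

definition isum :: "'k::field set \<Rightarrow> 'k set \<Rightarrow> 'k set" where
  "isum A B = {a + b | a b. a \<in> A \<and> b \<in> B}"

definition iprod :: "'k::field set \<Rightarrow> 'k set \<Rightarrow> 'k set \<Rightarrow> 'k set" where
  "iprod D A B = dspan D {a * b | a b. a \<in> A \<and> b \<in> B}"

definition iprod_list :: "'k::field set \<Rightarrow> 'k set list \<Rightarrow> 'k set" where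
  "iprod_list D Is = foldr (iprod D) Is D"

definition star_op :: "'k::field set \<Rightarrow> ('k set \<Rightarrow> 'k set) \<Rightarrow> bool" where
  "star_op D st \<longleftrightarrow>
     (\<forall>I. frac_ideal D I \<longrightarrow> frac_ideal D (st I)) \<and>
     (\<forall>x. x \<noteq> 0 \<longrightarrow> st (smul x D) = smul x D) \<and>
     (\<forall>x I. x \<noteq> 0 \<longrightarrow> frac_ideal D I \<longrightarrow> st (smul x I) = smul x (st I)) \<and>
     (\<forall>I. frac_ideal D I \<longrightarrow> I \<subseteq> st I) \<and>
     (\<forall>I J. frac_ideal D I \<longrightarrow> frac_ideal D J \<longrightarrow> I \<subseteq> J \<longrightarrow> st I \<subseteq> st J) \<and>
     (\<forall>I. frac_ideal D I \<longrightarrow> st (st I) = st I)"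

definition finite_character :: "'k::field set \<Rightarrow> ('k set \<Rightarrow> 'k set) \<Rightarrow> bool" where
  "finite_character D st \<longleftrightarrow>
     (\<forall>I. frac_ideal D I \<longrightarrow>
        st I = \<Union>{st J | J. frac_ideal D J \<and> fin_gen D J \<and> J \<subseteq> I})"

definition star_ideal :: "'k::field set \<Rightarrow> ('k set \<Rightarrow> 'k set) \<Rightarrow> 'k set \<Rightarrow> bool" where
  "star_ideal D st I \<longleftrightarrow> frac_ideal D I \<and> st I = I"

definition star_fin_type :: "'k::field set \<Rightarrow> ('k set \<Rightarrow> 'k set) \<Rightarrow> 'k set \<Rightarrow> bool" where
  "star_fin_type D st I \<longleftrightarrow> star_ideal D st I \<and>
     (\<exists>J. frac_ideal D J \<and> fin_gen D J \<and> I = st J)"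

definition maximal_star_ideal :: "'k::field set \<Rightarrow> ('k set \<Rightarrow> 'k set) \<Rightarrow> 'k set \<Rightarrow> bool" where
  "maximal_star_ideal D st P \<longleftrightarrow> star_ideal D st P \<and> P \<subseteq> D \<and> P \<noteq> D \<and>
     (\<forall>Q. star_ideal D st Q \<and> Q \<subseteq> D \<and> Q \<noteq> D \<and> P \<subseteq> Q \<longrightarrow> Q = P)"

definition star_comax :: "'k::field set \<Rightarrow> ('k set \<Rightarrow> 'k set) \<Rightarrow> 'k set \<Rightarrow> 'k set \<Rightarrow> bool" where
  "star_comax D st A B \<longleftrightarrow> st (isum A B) = D"

definition star_homog :: "'k::field set \<Rightarrow> ('k set \<Rightarrow> 'k set) \<Rightarrow> 'k set \<Rightarrow> bool" where
  "star_homog D st I \<longleftrightarrow> star_fin_type D st I \<and> I \<subseteq> D \<and> I \<noteq> D \<and>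
     (\<forall>A B. star_fin_type D st A \<and> A \<subseteq> D \<and> A \<noteq> D \<and>
            star_fin_type D st B \<and> B \<subseteq> D \<and> B \<noteq> D \<and> I \<subseteq> A \<and> I \<subseteq> B
            \<longrightarrow> st (isum A B) \<noteq> D)"

definition principal :: "'k::field set \<Rightarrow> 'k set \<Rightarrow> bool" where
  "principal D J \<longleftrightarrow> (\<exists>x. x \<noteq> 0 \<and> J = smul x D)"

definition star_f_homog :: "'k::field set \<Rightarrow> ('k set \<Rightarrow> 'k set) \<Rightarrow> 'k set \<Rightarrow> bool" where
  "star_f_homog D st I \<longleftrightarrow> star_homog D st I \<and>
     (\<forall>J. star_fin_type D st J \<and> I \<subseteq> J \<longrightarrow> principal D J)"

definition star_f_homog_elem :: "'k::field set \<Rightarrow> ('k set \<Rightarrow> 'k set) \<Rightarrow> 'k \<Rightarrow> bool" where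
  "star_f_homog_elem D st x \<longleftrightarrow> x \<in> D \<and> star_f_homog D st (smul x D)"

definition localization :: "'k::field set \<Rightarrow> 'k set \<Rightarrow> 'k set" where
  "localization D P = {a / s | a s. a \<in> D \<and> s \<in> D \<and> s \<notin> P}"

definition valuation_dom :: "'k::field set \<Rightarrow> bool" where
  "valuation_dom V \<longleftrightarrow> (\<forall>x. x \<noteq> 0 \<longrightarrow> x \<in> V \<or> inverse x \<in> V)"

definition prime_ideal :: "'k::field set \<Rightarrow> 'k set \<Rightarrow> bool" where
  "prime_ideal D P \<longleftrightarrow> P \<subseteq> D \<and> dsubmodule D P \<and> P \<noteq> D \<and>
     (\<forall>a\<in>D. \<forall>b\<in>D. a * b \<in> P \<longrightarrow> a \<in> P \<or> b \<in> P)"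

definition star_IRKT :: "'k::field set \<Rightarrow> ('k set \<Rightarrow> 'k set) \<Rightarrow> bool" where
  "star_IRKT D st \<longleftrightarrow>
     (\<forall>P. maximal_star_ideal D st P \<longrightarrow> valuation_dom (localization D P)) \<and>
     D = \<Inter>{localization D P | P. maximal_star_ideal D st P} \<and>
     (\<forall>x\<in>D. x \<noteq> 0 \<longrightarrow> finite {P. maximal_star_ideal D st P \<and> x \<in> P}) \<and>
     (\<forall>P Q R. maximal_star_ideal D st P \<and> maximal_star_ideal D st Q \<and> P \<noteq> Q \<and>
        prime_ideal D R \<and> R \<noteq> {0} \<longrightarrow> \<not> (R \<subseteq> P \<and> R \<subseteq> Q))"

definition gcd_domain :: "'k::field set \<Rightarrow> bool" where
  "gcd_domain D \<longleftrightarrow> (\<forall>a\<in>D. \<forall>b\<in>D. \<exists>d\<in>D. ddvd D d a \<and> ddvd D d b \<and>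
      (\<forall>c\<in>D. ddvd D c a \<and> ddvd D c b \<longrightarrow> ddvd D c d))"

definition comax_fhomog_fact :: "'k::field set \<Rightarrow> ('k set \<Rightarrow> 'k set) \<Rightarrow> 'k \<Rightarrow> 'k list \<Rightarrow> bool" where
  "comax_fhomog_fact D st x xs \<longleftrightarrow>
     (\<forall>y\<in>set xs. star_f_homog_elem D st y) \<and>
     (\<forall>i<length xs. \<forall>j<length xs. i \<noteq> j \<longrightarrow>
        star_comax D st (smul (xs ! i) D) (smul (xs ! j) D)) \<and>
     prod_list xs = x"

definition star_prod_fhomog :: "'k::field set \<Rightarrow> ('k set \<Rightarrow> 'k set) \<Rightarrow> 'k \<Rightarrow> bool" where
  "star_prod_fhomog D st x \<longleftrightarrow>
     (\<exists>Is. (\<forall>I\<in>set Is. star_f_homog D st I) \<and> smul x D = st (iprod_list D Is))"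

end

theory Submission
  imports Defs
begin

locale dom =
  fixes D :: "'k::field set"
  assumes dom: "domain_in D"
begin

lemma zero[simp]: "0 \<in> D" and one[simp]: "1 \<in> D"
  using dom by (auto simp: domain_in_def)
lemma add[intro]: "a \<in> D \<Longrightarrow> b \<in> D \<Longrightarrow> a + b \<in> D"
  and diff[intro]: "a \<in> D \<Longrightarrow> b \<in> D \<Longrightarrow> a - b \<in> D"
  and mult[intro]: "a \<in> D \<Longrightarrow> b \<in> D \<Longrightarrow> a * b \<in> D"
  using dom by (auto simp: domain_in_def)
lemma frac: "\<exists>a\<in>D. \<exists>b\<in>D. b \<noteq> 0 \<and> z = a / b"
  using dom by (auto simp: domain_in_def)
lemma uminus[intro]: "a \<in> D \<Longrightarrow> - a \<in> D"
  using diff[of 0 a] by simp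
lemma power[intro]: "a \<in> D \<Longrightarrow> a ^ n \<in> D"
  by (induction n) auto
lemma prod_list_in: "set xs \<subseteq> D \<Longrightarrow> prod_list xs \<in> D"
  by (induction xs) auto
lemma sum_in: "(\<And>s. s \<in> F \<Longrightarrow> f s \<in> D) \<Longrightarrow> sum f F \<in> D"
  by (induction F rule: infinite_finite_induct) auto

lemma dspanE: assumes "y \<in> dspan D S"
  obtains F c where "finite F" "F \<subseteq> S" "\<forall>s\<in>F. c s \<in> D" "y = (\<Sum>s\<in>F. c s * s)"
  using assms unfolding dspan_def mem_Collect_eq by (elim exE conjE) (rule that)
lemma dspanI: "finite F \<Longrightarrow> F \<subseteq> S \<Longrightarrow> \<forall>s\<in>F. c s \<in> D \<Longrightarrow> y = (\<Sum>s\<in>F. c s * s) \<Longrightarrow> y \<in> dspan D S"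
  unfolding dspan_def mem_Collect_eq by (intro exI conjI)

lemma dspan_sub: "dsubmodule D (dspan D S)"
proof -
  have z: "0 \<in> dspan D S" by (rule dspanI[of "{}"]) auto
  have ad: "a + b \<in> dspan D S" if A: "a \<in> dspan D S" "b \<in> dspan D S" for a b
  proof -
    obtain F c where F: "finite F" "F \<subseteq> S" "\<forall>s\<in>F. c s \<in> D" "a = (\<Sum>s\<in>F. c s * s)"
      using A(1) by (rule dspanE)
    obtain G e where G: "finite G" "G \<subseteq> S" "\<forall>s\<in>G. e s \<in> D" "b = (\<Sum>s\<in>G. e s * s)"
      using A(2) by (rule dspanE)
    define c' where "c' s = (if s \<in> F then c s else 0)" for s
    define e' where "e' s = (if s \<in> G then e s else 0)" for s
    have fin: "finite (F \<union> G)" using F(1) G(1) by simp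
    have a: "(\<Sum>s\<in>F \<union> G. c' s * s) = (\<Sum>s\<in>F. c s * s)"
      by (rule sum.mono_neutral_cong_right) (auto simp: c'_def F(1) G(1))
    have b: "(\<Sum>s\<in>F \<union> G. e' s * s) = (\<Sum>s\<in>G. e s * s)"
      by (rule sum.mono_neutral_cong_right) (auto simp: e'_def F(1) G(1))
    have "a + b = (\<Sum>s\<in>F \<union> G. (c' s + e' s) * s)"
      by (simp only: F(4) G(4) a[symmetric] b[symmetric] sum.distrib distrib_right)
    moreover have "\<forall>s\<in>F \<union> G. c' s + e' s \<in> D" using F(3) G(3) by (auto simp: c'_def e'_def)
    ultimately show ?thesis using F(2) G(2) fin by (intro dspanI[of "F \<union> G" _ "\<lambda>s. c' s + e' s"]) auto
  qed
  have mu: "d * a \<in> dspan D S" if A: "d \<in> D" "a \<in> dspan D S" for d a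
  proof -
    obtain F c where F: "finite F" "F \<subseteq> S" "\<forall>s\<in>F. c s \<in> D" "a = (\<Sum>s\<in>F. c s * s)"
      using A(2) by (rule dspanE)
    have "d * a = (\<Sum>s\<in>F. (d * c s) * s)" unfolding F(4) by (simp add: sum_distrib_left mult.assoc)
    thus ?thesis using F A(1) by (intro dspanI[of F _ "\<lambda>s. d * c s"]) auto
  qed
  show ?thesis unfolding dsubmodule_def using z ad mu by simp
qed

lemma dspan_incl: "S \<subseteq> dspan D S"
proof
  fix s assume "s \<in> S"
  thus "s \<in> dspan D S" by (intro dspanI[of "{s}" _ "\<lambda>_. 1"]) auto
qed

lemma sub_0: "dsubmodule D M \<Longrightarrow> 0 \<in> M" by (simp add: dsubmodule_def)
lemma sub_add: "dsubmodule D M \<Longrightarrow> a \<in> M \<Longrightarrow> b \<in> M \<Longrightarrow> a + b \<in> M" by (simp add: dsubmodule_def)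
lemma sub_mult: "dsubmodule D M \<Longrightarrow> d \<in> D \<Longrightarrow> a \<in> M \<Longrightarrow> d * a \<in> M" by (simp add: dsubmodule_def)
lemma sub_mult': "dsubmodule D M \<Longrightarrow> d \<in> D \<Longrightarrow> a \<in> M \<Longrightarrow> a * d \<in> M"
  by (metis mult.commute sub_mult)
lemma sub_uminus: "dsubmodule D M \<Longrightarrow> a \<in> M \<Longrightarrow> - a \<in> M"
  using sub_mult[of M "-1" a] uminus[OF one] by auto
lemma sub_diff: "dsubmodule D M \<Longrightarrow> a \<in> M \<Longrightarrow> b \<in> M \<Longrightarrow> a - b \<in> M"
  using sub_add[of M a "-b"] sub_uminus by auto

lemma sub_sum: assumes "dsubmodule D M" "finite F" "\<And>s. s \<in> F \<Longrightarrow> f s \<in> M" shows "sum f F \<in> M"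
  using assms(2,3) by (induction F rule: finite_induct) (use assms(1) in \<open>auto simp: dsubmodule_def\<close>)

lemma dspan_least: assumes "dsubmodule D M" "S \<subseteq> M" shows "dspan D S \<subseteq> M"
proof
  fix y assume "y \<in> dspan D S"
  then obtain F c where F: "finite F" "F \<subseteq> S" "\<forall>s\<in>F. c s \<in> D" "y = (\<Sum>s\<in>F. c s * s)"
    by (rule dspanE)
  have "c s * s \<in> M" if "s \<in> F" for s using sub_mult[OF assms(1)] F(2,3) assms(2) that by blast
  thus "y \<in> M" unfolding F(4) by (rule sub_sum[OF assms(1) F(1)])
qed

lemma dspan_mono: "S \<subseteq> T \<Longrightarrow> dspan D S \<subseteq> dspan D T"
  using dspan_least[OF dspan_sub] dspan_incl by blast

lemma D_sub: "dsubmodule D D" by (auto simp: dsubmodule_def)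

lemma smul_mem0: "a \<in> M \<Longrightarrow> x * a \<in> smul x M" unfolding smul_def by (rule imageI)
lemma smul_sub: assumes "dsubmodule D M" shows "dsubmodule D (smul x M)"
  unfolding dsubmodule_def
proof (intro conjI ballI)
  show "0 \<in> smul x M" using smul_mem0[of 0 M x] sub_0[OF assms] by simp
  fix a b assume "a \<in> smul x M" "b \<in> smul x M"
  then obtain a' b' where "a' \<in> M" "b' \<in> M" "a = x * a'" "b = x * b'" by (auto simp: smul_def)
  thus "a + b \<in> smul x M" using smul_mem0[of "a' + b'" M x] sub_add[OF assms] by (simp add: distrib_left)
next
  fix d a assume "d \<in> D" "a \<in> smul x M"
  then obtain a' where "a' \<in> M" "a = x * a'" by (auto simp: smul_def)
  thus "d * a \<in> smul x M" using smul_mem0[of "d * a'" M x] sub_mult[OF assms \<open>d \<in> D\<close>]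
    by (simp add: mult.left_commute)
qed

lemma smul_mem: "a \<in> M \<Longrightarrow> x * a \<in> smul x M" by (rule smul_mem0)
lemma smul_iff: assumes "x \<noteq> 0" shows "y \<in> smul x M \<longleftrightarrow> y / x \<in> M"
proof
  assume "y \<in> smul x M" then obtain a where "a \<in> M" "y = x * a" by (auto simp: smul_def)
  thus "y / x \<in> M" using assms by simp
next
  assume "y / x \<in> M" hence "x * (y / x) \<in> smul x M" by (rule smul_mem)
  thus "y \<in> smul x M" using assms by simp
qed
lemma smul_smul: "smul x (smul y M) = smul (x * y) M"
  unfolding smul_def image_image by (simp add: mult.assoc)
lemma smul_one[simp]: "smul 1 M = M" by (simp add: smul_def)
lemma smul_mono: "A \<subseteq> B \<Longrightarrow> smul x A \<subseteq> smul x B" by (auto simp: smul_def)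
lemma smul_inv: "x \<noteq> 0 \<Longrightarrow> smul (inverse x) (smul x A) = A"
  unfolding smul_smul by simp
lemma smul_cancel: "x \<noteq> 0 \<Longrightarrow> smul x A = smul x B \<Longrightarrow> A = B"
  by (metis smul_inv)
lemma smul_subset_cancel: "x \<noteq> 0 \<Longrightarrow> smul x A \<subseteq> smul x B \<Longrightarrow> A \<subseteq> B"
  using smul_inv[of x A] smul_inv[of x B] smul_mono[of "smul x A" "smul x B" "inverse x"] by argo
lemma smul_D_mem: "x \<in> smul x D" using smul_mem[of 1 D x] by simp

lemma principal_sub: assumes "dsubmodule D M" shows "smul a D \<subseteq> M \<longleftrightarrow> a \<in> M"
proof
  assume "smul a D \<subseteq> M" thus "a \<in> M" using smul_D_mem by blast
next
  assume "a \<in> M" thus "smul a D \<subseteq> M" using sub_mult'[OF assms] by (auto simp: smul_def)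
qed

end


context dom begin

lemma frac_sub: "frac_ideal D I \<Longrightarrow> dsubmodule D I" by (simp add: frac_ideal_def)
lemma frac_nz: assumes "frac_ideal D I" obtains w where "w \<in> I" "w \<noteq> 0"
proof -
  have "I \<noteq> {0}" "0 \<in> I" using assms by (auto simp: frac_ideal_def dsubmodule_def)
  thus ?thesis using that by blast
qed
lemma fracI: "dsubmodule D I \<Longrightarrow> I \<subseteq> D \<Longrightarrow> w \<in> I \<Longrightarrow> w \<noteq> 0 \<Longrightarrow> frac_ideal D I"
  unfolding frac_ideal_def by (intro conjI bexI[of _ 1]) auto

lemma frac_D: "frac_ideal D D" by (rule fracI[OF D_sub _ one]) auto

lemma frac_smul: assumes "frac_ideal D I" "x \<noteq> 0" shows "frac_ideal D (smul x I)"
proof -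
  obtain d where d: "d \<in> D" "d \<noteq> 0" "smul d I \<subseteq> D" using assms(1) by (auto simp: frac_ideal_def)
  obtain p q where pq: "p \<in> D" "q \<in> D" "q \<noteq> 0" "x = p / q" using frac[of x] by blast
  obtain w where w: "w \<in> I" "w \<noteq> 0" using assms(1) by (rule frac_nz)
  have "smul (d * q) (smul x I) \<subseteq> D"
  proof
    fix y assume "y \<in> smul (d * q) (smul x I)"
    then obtain a where a: "a \<in> I" "y = d * q * (x * a)" by (auto simp: smul_def)
    have "y = p * (d * a)" using a pq by simp
    moreover have "d * a \<in> D" using d a smul_mem[of a I d] by blast
    ultimately show "y \<in> D" using pq by auto
  qed
  moreover have "x * w \<in> smul x I" "x * w \<noteq> 0" using w assms(2) smul_mem by auto
  moreover have "smul x I \<noteq> {0}" using calculation(2,3) by blast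
  ultimately show ?thesis unfolding frac_ideal_def using smul_sub[OF frac_sub[OF assms(1)]] d pq
    by (intro conjI bexI[of _ "d * q"]) auto
qed

lemma frac_principal: "x \<noteq> 0 \<Longrightarrow> frac_ideal D (smul x D)"
  using frac_smul[OF frac_D] by blast

lemma dspan_frac: "S \<subseteq> D \<Longrightarrow> a \<in> S \<Longrightarrow> a \<noteq> 0 \<Longrightarrow> frac_ideal D (dspan D S)"
  by (rule fracI[OF dspan_sub dspan_least[OF D_sub]]) (auto intro: dspan_incl[THEN subsetD])

lemma dspan_single: "dspan D {a} = smul a D"
proof
  show "dspan D {a} \<subseteq> smul a D" by (rule dspan_least[OF smul_sub[OF D_sub]]) (simp add: smul_D_mem)
  show "smul a D \<subseteq> dspan D {a}" using principal_sub[OF dspan_sub] dspan_incl by blast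
qed

lemma dspan_smul: assumes "x \<noteq> 0" shows "smul x (dspan D S) = dspan D ((\<lambda>y. x * y) ` S)"
proof
  show "smul x (dspan D S) \<subseteq> dspan D ((\<lambda>y. x * y) ` S)"
  proof -
    have "dspan D S \<subseteq> smul (inverse x) (dspan D ((\<lambda>y. x * y) ` S))"
    proof (rule dspan_least[OF smul_sub[OF dspan_sub]], rule subsetI)
      fix s assume "s \<in> S"
      hence "x * s \<in> dspan D ((\<lambda>y. x * y) ` S)" using dspan_incl by blast
      hence "inverse x * (x * s) \<in> smul (inverse x) (dspan D ((\<lambda>y. x * y) ` S))" by (rule smul_mem)
      moreover have "inverse x * (x * s) = s" using assms by (simp add: mult.assoc[symmetric])
      ultimately show "s \<in> smul (inverse x) (dspan D ((\<lambda>y. x * y) ` S))" by simp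
    qed
    hence "smul x (dspan D S) \<subseteq> smul x (smul (inverse x) (dspan D ((\<lambda>y. x * y) ` S)))" by (rule smul_mono)
    thus ?thesis using assms by (simp add: smul_smul)
  qed
  show "dspan D ((\<lambda>y. x * y) ` S) \<subseteq> smul x (dspan D S)"
    by (rule dspan_least[OF smul_sub[OF dspan_sub]]) (auto intro!: smul_mem dspan_incl[THEN subsetD])
qed

lemma isum_sub: assumes "dsubmodule D A" "dsubmodule D B" shows "dsubmodule D (isum A B)"
  unfolding dsubmodule_def
proof (intro conjI ballI)
  show "0 \<in> isum A B" unfolding isum_def using sub_0[OF assms(1)] sub_0[OF assms(2)] by force
  fix a b assume "a \<in> isum A B" "b \<in> isum A B"
  then obtain a1 a2 b1 b2 where "a1 \<in> A" "a2 \<in> B" "b1 \<in> A" "b2 \<in> B" "a = a1 + a2" "b = b1 + b2"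
    unfolding isum_def by blast
  moreover have "a + b = (a1 + b1) + (a2 + b2)" using calculation by (simp add: algebra_simps)
  ultimately show "a + b \<in> isum A B" unfolding isum_def using sub_add[OF assms(1)] sub_add[OF assms(2)] by blast
next
  fix d a assume "d \<in> D" "a \<in> isum A B"
  then obtain a1 a2 where "a1 \<in> A" "a2 \<in> B" "a = a1 + a2" unfolding isum_def by blast
  moreover have "d * a = d * a1 + d * a2" using calculation by (simp add: algebra_simps)
  ultimately show "d * a \<in> isum A B" unfolding isum_def using sub_mult[OF assms(1) \<open>d \<in> D\<close>] sub_mult[OF assms(2) \<open>d \<in> D\<close>] by blast
qed

lemma isum_left: "dsubmodule D B \<Longrightarrow> A \<subseteq> isum A B"
  unfolding isum_def using sub_0 by force
lemma isum_right: "dsubmodule D A \<Longrightarrow> B \<subseteq> isum A B"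
  unfolding isum_def using sub_0 by force
lemma isum_least: "dsubmodule D M \<Longrightarrow> A \<subseteq> M \<Longrightarrow> B \<subseteq> M \<Longrightarrow> isum A B \<subseteq> M"
  unfolding isum_def using sub_add by blast

lemma isum_principal: "isum (smul a D) (smul b D) = dspan D {a, b}"
proof
  show "isum (smul a D) (smul b D) \<subseteq> dspan D {a, b}"
    by (rule isum_least[OF dspan_sub]) (auto simp: principal_sub[OF dspan_sub] intro: dspan_incl[THEN subsetD])
  have "a + 0 \<in> isum (smul a D) (smul b D)" "0 + b \<in> isum (smul a D) (smul b D)"
    unfolding isum_def using smul_D_mem sub_0[OF smul_sub[OF D_sub]] by blast+
  hence "{a, b} \<subseteq> isum (smul a D) (smul b D)" by simp
  thus "dspan D {a, b} \<subseteq> isum (smul a D) (smul b D)"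
    by (rule dspan_least[OF isum_sub[OF smul_sub[OF D_sub] smul_sub[OF D_sub]]])
qed

lemma isum_frac_int: "frac_ideal D A \<Longrightarrow> frac_ideal D B \<Longrightarrow> A \<subseteq> D \<Longrightarrow> B \<subseteq> D \<Longrightarrow> frac_ideal D (isum A B)"
  by (metis frac_nz fracI frac_sub isum_least isum_left isum_sub D_sub subsetD)

lemma principal_eq_assoc: assumes "a \<noteq> 0" "b \<noteq> 0" "smul a D = smul b D" shows "dassoc D a b"
proof -
  have "b \<in> smul a D" using assms(3) smul_D_mem by simp
  then obtain u where u: "u \<in> D" "b = a * u" by (auto simp: smul_def)
  have "a \<in> smul b D" using assms(3) smul_D_mem by metis
  then obtain v where v: "v \<in> D" "a = b * v" by (auto simp: smul_def)
  have "u * v = 1" using u v assms(1) by (simp add: mult.assoc) (metis mult_cancel_left1 mult.assoc)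
  hence "inverse u = v" by (metis inverse_unique)
  thus ?thesis unfolding dassoc_def dunit_def using u v \<open>u * v = 1\<close> by (intro exI[of _ u]) (auto simp: mult.commute)
qed

lemma unit_iff: assumes "a \<in> D" "a \<noteq> 0" shows "dunit D a \<longleftrightarrow> smul a D = D"
proof
  assume "dunit D a"
  hence ia: "inverse a \<in> D" by (simp add: dunit_def)
  show "smul a D = D"
  proof
    show "smul a D \<subseteq> D" using assms by (auto simp: smul_def)
    show "D \<subseteq> smul a D"
    proof
      fix y assume "y \<in> D" hence "a * (inverse a * y) \<in> smul a D" using ia by (intro smul_mem) auto
      moreover have "a * (inverse a * y) = y" using assms by (simp add: mult.assoc[symmetric])
      ultimately show "y \<in> smul a D" by simp
    qed
  qed
next
  assume "smul a D = D"
  hence "1 \<in> smul a D" by simp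
  then obtain u where "u \<in> D" "1 = a * u" by (auto simp: smul_def)
  hence "inverse a = u" by (metis inverse_unique)
  thus "dunit D a" using assms \<open>u \<in> D\<close> by (simp add: dunit_def)
qed

lemma int_one: assumes "dsubmodule D J" "J \<subseteq> D" "1 \<in> J" shows "J = D"
  using principal_sub[OF assms(1), of 1] assms by auto

end



locale star = dom +
  fixes st :: "'k::field set \<Rightarrow> 'k set"
  assumes so: "star_op D st" and fc: "finite_character D st"
begin

lemma st_frac: "frac_ideal D I \<Longrightarrow> frac_ideal D (st I)" using so by (simp add: star_op_def)
lemma st_ext: "frac_ideal D I \<Longrightarrow> I \<subseteq> st I" using so by (simp add: star_op_def)
lemma st_idem: "frac_ideal D I \<Longrightarrow> st (st I) = st I" using so by (simp add: star_op_def)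
lemma st_mono: "frac_ideal D I \<Longrightarrow> frac_ideal D J \<Longrightarrow> I \<subseteq> J \<Longrightarrow> st I \<subseteq> st J"
  using so by (simp add: star_op_def)
lemma st_princ: "x \<noteq> 0 \<Longrightarrow> st (smul x D) = smul x D" using so by (simp add: star_op_def)
lemma st_smul: "x \<noteq> 0 \<Longrightarrow> frac_ideal D I \<Longrightarrow> st (smul x I) = smul x (st I)"
  using so by (simp add: star_op_def)
lemma st_D: "st D = D" using st_princ[of 1] by simp
lemma st_int: "frac_ideal D I \<Longrightarrow> I \<subseteq> D \<Longrightarrow> st I \<subseteq> D"
  using st_mono[OF _ frac_D, of I] st_D by simp
lemma st_sub: "frac_ideal D I \<Longrightarrow> dsubmodule D (st I)" using st_frac frac_sub by blast
lemma star_ideal_st: "frac_ideal D I \<Longrightarrow> star_ideal D st (st I)"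
  by (simp add: star_ideal_def st_frac st_idem)
lemma star_ideal_princ: "x \<noteq> 0 \<Longrightarrow> star_ideal D st (smul x D)"
  by (simp add: star_ideal_def st_princ frac_principal)

definition ok :: "'k set \<Rightarrow> bool" where "ok S \<longleftrightarrow> S \<subseteq> D \<and> (\<exists>a\<in>S. a \<noteq> 0)"

lemma okI: "S \<subseteq> D \<Longrightarrow> a \<in> S \<Longrightarrow> a \<noteq> 0 \<Longrightarrow> ok S" unfolding ok_def by blast

lemma ok_frac: "ok S \<Longrightarrow> frac_ideal D (dspan D S)" unfolding ok_def using dspan_frac by blast
lemma ok_dspan_int: "ok S \<Longrightarrow> dspan D S \<subseteq> D" using dspan_least[OF D_sub, of S] unfolding ok_def by simp

lemma T_frac: "ok S \<Longrightarrow> frac_ideal D (st (dspan D S))" using st_frac ok_frac by blast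
lemma T_int: "ok S \<Longrightarrow> st (dspan D S) \<subseteq> D" using st_int ok_frac ok_dspan_int by blast
lemma T_incl: "ok S \<Longrightarrow> S \<subseteq> st (dspan D S)" using st_ext ok_frac dspan_incl by blast
lemma T_star: "ok S \<Longrightarrow> star_ideal D st (st (dspan D S))" using star_ideal_st ok_frac by blast
lemma T_least: assumes "ok S" "star_ideal D st J" "S \<subseteq> J" shows "st (dspan D S) \<subseteq> J"
proof -
  have "dspan D S \<subseteq> J" using assms(2,3) dspan_least frac_sub by (auto simp: star_ideal_def)
  moreover have "frac_ideal D J" "st J = J" using assms(2) by (simp_all add: star_ideal_def)
  ultimately show ?thesis using st_mono[OF ok_frac[OF assms(1)], of J] by simp
qed
lemma T_mono: "ok S \<Longrightarrow> ok S' \<Longrightarrow> S \<subseteq> st (dspan D S') \<Longrightarrow> st (dspan D S) \<subseteq> st (dspan D S')"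
  using T_least T_star by blast
lemma T_fin: assumes "ok S" "finite S" shows "star_fin_type D st (st (dspan D S))"
  unfolding star_fin_type_def fin_gen_def using T_star[OF assms(1)] ok_frac[OF assms(1)] assms(2) by blast
lemma T_princ: "a \<noteq> 0 \<Longrightarrow> st (dspan D {a}) = smul a D" by (simp add: dspan_single st_princ)
lemma T_smul: assumes "x \<noteq> 0" "ok S" shows "smul x (st (dspan D S)) = st (dspan D ((\<lambda>y. x * y) ` S))"
  using st_smul[OF assms(1) ok_frac[OF assms(2)]] dspan_smul[OF assms(1)] by simp
lemma T_one: "ok S \<Longrightarrow> 1 \<in> st (dspan D S) \<Longrightarrow> st (dspan D S) = D"
  using int_one T_int st_sub ok_frac by blast

lemma star_int_one: "star_ideal D st J \<Longrightarrow> J \<subseteq> D \<Longrightarrow> 1 \<in> J \<Longrightarrow> J = D"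
  using int_one frac_sub by (auto simp: star_ideal_def)

lemma max_star: "maximal_star_ideal D st P \<Longrightarrow> star_ideal D st P" by (simp add: maximal_star_ideal_def)
lemma max_int: "maximal_star_ideal D st P \<Longrightarrow> P \<subseteq> D" by (simp add: maximal_star_ideal_def)
lemma max_sub: "maximal_star_ideal D st P \<Longrightarrow> dsubmodule D P"
  by (simp add: maximal_star_ideal_def star_ideal_def frac_sub)
lemma max_frac: "maximal_star_ideal D st P \<Longrightarrow> frac_ideal D P"
  by (simp add: maximal_star_ideal_def star_ideal_def)
lemma max_st: "maximal_star_ideal D st P \<Longrightarrow> st P = P"
  by (simp add: maximal_star_ideal_def star_ideal_def)
lemma max_one: "maximal_star_ideal D st P \<Longrightarrow> 1 \<notin> P"
  using star_int_one by (auto simp: maximal_star_ideal_def)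
lemma max_max: "maximal_star_ideal D st P \<Longrightarrow> star_ideal D st Q \<Longrightarrow> Q \<subseteq> D \<Longrightarrow> Q \<noteq> D \<Longrightarrow> P \<subseteq> Q \<Longrightarrow> Q = P"
  by (simp add: maximal_star_ideal_def)
lemma max_unit: assumes "maximal_star_ideal D st P" "dunit D u" shows "u \<notin> P"
proof
  assume "u \<in> P"
  have "inverse u * u \<in> P" by (rule sub_mult[OF max_sub[OF assms(1)]]) (use assms(2) \<open>u \<in> P\<close> in \<open>auto simp: dunit_def\<close>)
  moreover have "inverse u * u = 1" using assms(2) by (simp add: dunit_def)
  ultimately show False using assms(1) max_one by simp
qed
lemma max_mult: "maximal_star_ideal D st P \<Longrightarrow> a \<in> P \<Longrightarrow> d \<in> D \<Longrightarrow> a * d \<in> P"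
  using sub_mult' max_sub by blast

lemma max_isum: assumes "maximal_star_ideal D st P" "a \<in> D" "a \<notin> P"
  shows "st (isum P (smul a D)) = D"
proof -
  have a0: "a \<noteq> 0" using assms sub_0 max_sub by blast
  have aD: "smul a D \<subseteq> D" using principal_sub[OF D_sub] assms(2) by simp
  have fr: "frac_ideal D (isum P (smul a D))"
    using isum_frac_int[OF max_frac[OF assms(1)] frac_principal[OF a0] max_int[OF assms(1)] aD] .
  have sub: "P \<subseteq> st (isum P (smul a D))"
    using isum_left[OF smul_sub[OF D_sub]] st_ext[OF fr] by blast
  have ain: "a \<in> st (isum P (smul a D))"
    using isum_right[OF max_sub[OF assms(1)]] st_ext[OF fr] smul_D_mem by blast
  have int: "st (isum P (smul a D)) \<subseteq> D"
    using st_int[OF fr isum_least[OF D_sub max_int[OF assms(1)] aD]] .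
  show ?thesis
  proof (rule ccontr)
    assume "st (isum P (smul a D)) \<noteq> D"
    hence "st (isum P (smul a D)) = P"
      using max_max[OF assms(1) star_ideal_st[OF fr] int] sub by blast
    thus False using ain assms(3) by simp
  qed
qed

lemma max_prime: assumes "maximal_star_ideal D st P" "a \<in> D" "b \<in> D" "a * b \<in> P"
  shows "a \<in> P \<or> b \<in> P"
proof (rule ccontr)
  assume "\<not> (a \<in> P \<or> b \<in> P)"
  hence na: "a \<notin> P" and nb: "b \<notin> P" by auto
  have a0: "a \<noteq> 0" and b0: "b \<noteq> 0" using na nb sub_0 max_sub[OF assms(1)] by auto
  have aD: "smul a D \<subseteq> D" using principal_sub[OF D_sub] assms(2) by simp
  have fr: "frac_ideal D (isum P (smul a D))"
    using isum_frac_int[OF max_frac[OF assms(1)] frac_principal[OF a0] max_int[OF assms(1)] aD] .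
  have "smul b (isum P (smul a D)) \<subseteq> P"
  proof
    fix y assume "y \<in> smul b (isum P (smul a D))"
    then obtain p d where "p \<in> P" "d \<in> D" "y = b * (p + a * d)" by (auto simp: smul_def isum_def)
    moreover have "b * (p + a * d) = b * p + (a * b) * d" by (simp add: algebra_simps)
    ultimately show "y \<in> P"
      using sub_add[OF max_sub[OF assms(1)]] sub_mult[OF max_sub[OF assms(1)] assms(3)] max_mult[OF assms(1) assms(4)]
      by auto
  qed
  hence "st (smul b (isum P (smul a D))) \<subseteq> st P"
    using st_mono frac_smul[OF fr b0] max_frac[OF assms(1)] by blast
  hence "smul b D \<subseteq> P" using st_smul[OF b0 fr] max_isum[OF assms(1,2) na] max_st[OF assms(1)] by simp
  thus False using nb smul_D_mem by blast
qed

lemma max_prod_list: assumes "maximal_star_ideal D st P" "set xs \<subseteq> D" "prod_list xs \<in> P"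
  shows "\<exists>x\<in>set xs. x \<in> P"
  using assms(2,3)
proof (induction xs)
  case Nil thus ?case using max_one[OF assms(1)] by simp
next
  case (Cons a xs)
  thus ?case using max_prime[OF assms(1), of a "prod_list xs"] prod_list_in by auto
qed

lemma max_prod_list_not: assumes "maximal_star_ideal D st P" "set xs \<subseteq> D" "\<forall>x\<in>set xs. x \<notin> P"
  shows "prod_list xs \<notin> P"
  using max_prod_list[OF assms(1,2)] assms(3) by blast

lemma zorn: assumes "star_ideal D st I" "I \<subseteq> D" "I \<noteq> D"
  shows "\<exists>P. maximal_star_ideal D st P \<and> I \<subseteq> P"
proof -
  define A where "A = {Q. star_ideal D st Q \<and> Q \<subseteq> D \<and> Q \<noteq> D \<and> I \<subseteq> Q}"
  have IA: "I \<in> A" using assms by (simp add: A_def)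
  have ch: "\<Union>C \<in> A" if C: "C \<noteq> {}" "subset.chain A C" for C
  proof -
    have CA: "C \<subseteq> A" and cmp: "\<And>X Y. X \<in> C \<Longrightarrow> Y \<in> C \<Longrightarrow> X \<subseteq> Y \<or> Y \<subseteq> X"
      using C(2) by (auto simp: subset.chain_def)
    have Qs: "star_ideal D st Q" "Q \<subseteq> D" "Q \<noteq> D" "I \<subseteq> Q" if "Q \<in> C" for Q
      using CA that by (auto simp: A_def)
    have one: "1 \<notin> \<Union>C"
    proof
      assume "1 \<in> \<Union>C" then obtain Q where "Q \<in> C" "1 \<in> Q" by blast
      thus False using Qs[OF \<open>Q \<in> C\<close>] star_int_one by blast
    qed
    have int: "\<Union>C \<subseteq> D" using Qs(2) by blast
    obtain Q0 where Q0: "Q0 \<in> C" using C(1) by blast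
    have IU: "I \<subseteq> \<Union>C" using Qs(4)[OF Q0] Q0 by blast
    have Qsub: "dsubmodule D Q" if "Q \<in> C" for Q using Qs(1)[OF that] frac_sub by (simp add: star_ideal_def)
    have subU: "dsubmodule D (\<Union>C)"
      unfolding dsubmodule_def
    proof (intro conjI ballI)
      show "0 \<in> \<Union>C" using Q0 Qsub sub_0 by blast
      fix a b assume "a \<in> \<Union>C" "b \<in> \<Union>C"
      then obtain X Y where "X \<in> C" "Y \<in> C" "a \<in> X" "b \<in> Y" by blast
      thus "a + b \<in> \<Union>C" using cmp[of X Y] Qsub[of X] Qsub[of Y] sub_add[of X a b] sub_add[of Y a b] by blast
    next
      fix d a assume "d \<in> D" "a \<in> \<Union>C"
      then obtain X where "X \<in> C" "a \<in> X" by blast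
      thus "d * a \<in> \<Union>C" using Qsub[of X] sub_mult[of X d a] \<open>d \<in> D\<close> by blast
    qed
    obtain w where w: "w \<in> I" "w \<noteq> 0" using assms(1) frac_nz by (auto simp: star_ideal_def)
    have frU: "frac_ideal D (\<Union>C)" using fracI[OF subU int] w IU by blast
    have "st (\<Union>C) \<subseteq> \<Union>C"
    proof
      fix z assume "z \<in> st (\<Union>C)"
      then obtain J where J: "frac_ideal D J" "fin_gen D J" "J \<subseteq> \<Union>C" "z \<in> st J"
        using fc frU unfolding finite_character_def by blast
      obtain F where F: "finite F" "J = dspan D F" using J(2) by (auto simp: fin_gen_def)
      have "F \<subseteq> \<Union>C" using J(3) F(2) dspan_incl by blast
      then obtain Q where Q: "Q \<in> C" "F \<subseteq> Q" using finite_subset_Union_chain[OF F(1) _ C(1) C(2)] by blast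
      have "J \<subseteq> Q" using F(2) dspan_least[OF Qsub[OF Q(1)] Q(2)] by simp
      moreover have "frac_ideal D Q" "st Q = Q" using Qs(1)[OF Q(1)] by (simp_all add: star_ideal_def)
      ultimately have "st J \<subseteq> Q" using st_mono[OF J(1), of Q] by simp
      thus "z \<in> \<Union>C" using J(4) Q(1) by blast
    qed
    hence "st (\<Union>C) = \<Union>C" using st_ext[OF frU] by blast
    thus ?thesis unfolding A_def using frU int one IU by (auto simp: star_ideal_def)
  qed
  obtain M where M: "M \<in> A" "\<forall>X\<in>A. M \<subseteq> X \<longrightarrow> X = M"
    using subset_Zorn_nonempty[of A] IA ch by blast
  have "maximal_star_ideal D st M"
    unfolding maximal_star_ideal_def
  proof (intro conjI allI impI)
    show "star_ideal D st M" "M \<subseteq> D" "M \<noteq> D" using M(1) by (auto simp: A_def)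
    fix Q assume "star_ideal D st Q \<and> Q \<subseteq> D \<and> Q \<noteq> D \<and> M \<subseteq> Q"
    moreover have "I \<subseteq> M" using M(1) by (simp add: A_def)
    ultimately have "Q \<in> A" by (auto simp: A_def)
    thus "Q = M" using M(2) \<open>star_ideal D st Q \<and> Q \<subseteq> D \<and> Q \<noteq> D \<and> M \<subseteq> Q\<close> by blast
  qed
  thus ?thesis using M(1) by (auto simp: A_def)
qed

lemma max_elem: assumes "a \<in> D" "a \<noteq> 0" "\<not> dunit D a" shows "\<exists>P. maximal_star_ideal D st P \<and> a \<in> P"
proof -
  have "smul a D \<noteq> D" using unit_iff assms by blast
  moreover have "smul a D \<subseteq> D" using assms(1) by (auto simp: smul_def)
  ultimately obtain P where "maximal_star_ideal D st P" "smul a D \<subseteq> P"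
    using zorn star_ideal_princ[OF assms(2)] by blast
  thus ?thesis using smul_D_mem by blast
qed

end


context star begin

definition GP :: bool where "GP \<longleftrightarrow> (\<forall>J. star_fin_type D st J \<longrightarrow> principal D J)"

lemma ddvd_iff: "ddvd D a b \<longleftrightarrow> b \<in> smul a D" by (auto simp: ddvd_def smul_def)

lemma smul_zero_D: "smul 0 D = {0}" unfolding smul_def using zero by (auto intro: image_eqI[of 0 _ 0])
lemma frac_principal_nz: "frac_ideal D (smul y D) \<Longrightarrow> y \<noteq> 0"
  using smul_zero_D by (auto simp: frac_ideal_def)

lemma fh_principal: assumes "star_f_homog D st I"
  obtains y where "y \<in> D" "y \<noteq> 0" "I = smul y D"
proof -
  have h: "star_homog D st I" and p: "\<forall>J. star_fin_type D st J \<and> I \<subseteq> J \<longrightarrow> principal D J"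
    using assms by (auto simp: star_f_homog_def)
  have "star_fin_type D st I" "I \<subseteq> D" using h by (auto simp: star_homog_def)
  hence "principal D I" using p by blast
  then obtain y where y: "y \<noteq> 0" "I = smul y D" by (auto simp: principal_def)
  hence "y \<in> D" using \<open>I \<subseteq> D\<close> smul_D_mem by blast
  thus ?thesis using that y by blast
qed

lemma GP_from: assumes "star_f_homog D st I" shows GP
  unfolding GP_def
proof (intro allI impI)
  fix J assume J: "star_fin_type D st J"
  obtain y where y: "y \<in> D" "y \<noteq> 0" "I = smul y D" using assms by (rule fh_principal)
  have p: "\<forall>J. star_fin_type D st J \<and> I \<subseteq> J \<longrightarrow> principal D J"
    using assms by (auto simp: star_f_homog_def)
  have fJ: "frac_ideal D J" and sJ: "st J = J" using J by (auto simp: star_fin_type_def star_ideal_def)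
  obtain J0 where J0: "frac_ideal D J0" "fin_gen D J0" "J = st J0" using J by (auto simp: star_fin_type_def)
  obtain F where F: "finite F" "J0 = dspan D F" using J0(2) by (auto simp: fin_gen_def)
  obtain w where w: "w \<in> J" "w \<noteq> 0" using fJ by (rule frac_nz)
  define c where "c = y / w"
  have c0: "c \<noteq> 0" using y w by (simp add: c_def)
  have f1: "frac_ideal D (smul c J)" using frac_smul[OF fJ c0] .
  have s1: "st (smul c J) = smul c J" using st_smul[OF c0 fJ] sJ by simp
  have e1: "smul c J = st (smul c J0)" using st_smul[OF c0 J0(1)] J0(3) by simp
  have "smul c J0 = dspan D ((\<lambda>z. c * z) ` F)" using dspan_smul[OF c0] F(2) by simp
  hence fg: "fin_gen D (smul c J0)" using F(1) by (auto simp: fin_gen_def)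
  have sft: "star_fin_type D st (smul c J)"
    unfolding star_fin_type_def star_ideal_def using f1 s1 e1 fg frac_smul[OF J0(1) c0] by blast
  have "c * w \<in> smul c J" using w(1) by (rule smul_mem)
  hence "y \<in> smul c J" using w by (simp add: c_def)
  hence "I \<subseteq> smul c J" using y(3) principal_sub[OF frac_sub[OF f1]] by simp
  hence "principal D (smul c J)" using p sft by blast
  then obtain z where z: "z \<noteq> 0" "smul c J = smul z D" by (auto simp: principal_def)
  have "J = smul (inverse c) (smul c J)" using smul_inv[OF c0] by simp
  also have "\<dots> = smul (inverse c * z) D" using z by (simp add: smul_smul)
  finally show "principal D J" unfolding principal_def using z c0 by (intro exI[of _ "inverse c * z"]) auto
qed

lemma GP_T: assumes GP "ok S" "finite S" obtains d where "d \<in> D" "d \<noteq> 0" "st (dspan D S) = smul d D"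
proof -
  have "principal D (st (dspan D S))" using assms T_fin unfolding GP_def by blast
  then obtain d where d: "d \<noteq> 0" "st (dspan D S) = smul d D" by (auto simp: principal_def)
  hence "d \<in> D" using T_int[OF assms(2)] smul_D_mem by blast
  thus ?thesis using that d by blast
qed

lemma ok2: "a \<in> D \<Longrightarrow> b \<in> D \<Longrightarrow> b \<noteq> 0 \<Longrightarrow> ok {a, b}" by (rule okI[of _ b]) auto

lemma coprime_rep: assumes GP "a \<in> D" "b \<in> D" "b \<noteq> 0"
  obtains d a' b' where "d \<in> D" "d \<noteq> 0" "a' \<in> D" "b' \<in> D" "a = d * a'" "b = d * b'" "b' \<noteq> 0"
    "st (dspan D {a', b'}) = D"
proof -
  obtain d where d: "d \<in> D" "d \<noteq> 0" "st (dspan D {a, b}) = smul d D"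
    using GP_T[OF assms(1) ok2[OF assms(2-4)]] by blast
  have "a \<in> smul d D" "b \<in> smul d D" using T_incl[OF ok2[OF assms(2-4)]] d(3) by auto
  then obtain a' b' where ab: "a' \<in> D" "b' \<in> D" "a = d * a'" "b = d * b'" by (auto simp: smul_def)
  have b0: "b' \<noteq> 0" using ab assms(4) by auto
  have "smul d (st (dspan D {a', b'})) = st (dspan D {a, b})"
    using T_smul[OF d(2) ok2[OF ab(1,2) b0]] ab by simp
  hence "st (dspan D {a', b'}) = D" using d(2,3) smul_cancel by metis
  thus ?thesis using that d ab b0 by blast
qed

lemma T2_not_both: assumes "st (dspan D {a, b}) = D" "ok {a, b}" "maximal_star_ideal D st P" "a \<in> P" "b \<in> P"
  shows False
proof -
  have "st (dspan D {a, b}) \<subseteq> P" using T_least[OF assms(2) max_star[OF assms(3)]] assms(4,5) by simp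
  thus False using assms(1) max_one[OF assms(3)] by auto
qed

lemma locI: "a \<in> D \<Longrightarrow> s \<in> D \<Longrightarrow> s \<notin> P \<Longrightarrow> x = a / s \<Longrightarrow> x \<in> localization D P"
  by (auto simp: localization_def)

lemma valuation_GP: assumes GP "maximal_star_ideal D st P" shows "valuation_dom (localization D P)"
  unfolding valuation_dom_def
proof (intro allI impI)
  fix x :: 'k assume x0: "x \<noteq> 0"
  obtain a b where ab: "a \<in> D" "b \<in> D" "b \<noteq> 0" "x = a / b" using frac[of x] by blast
  obtain d a' b' where r: "d \<in> D" "d \<noteq> 0" "a' \<in> D" "b' \<in> D" "a = d * a'" "b = d * b'" "b' \<noteq> 0"
    "st (dspan D {a', b'}) = D" using coprime_rep[OF assms(1) ab(1-3)] by blast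
  have x': "x = a' / b'" using ab r by simp
  have "\<not> (a' \<in> P \<and> b' \<in> P)" using T2_not_both[OF r(8) ok2[OF r(3,4,7)] assms(2)] by blast
  show "x \<in> localization D P \<or> inverse x \<in> localization D P"
  proof (cases "b' \<in> P")
    case True
    hence "a' \<notin> P" using \<open>\<not> (a' \<in> P \<and> b' \<in> P)\<close> by blast
    have "inverse x = b' / a'" using x' by simp
    thus ?thesis using locI[OF r(4) r(3) \<open>a' \<notin> P\<close>] by blast
  next
    case False
    thus ?thesis using locI[OF r(3) r(4) False x'] by blast
  qed
qed

lemma gcd_GP: assumes GP shows "gcd_domain D"
  unfolding gcd_domain_def
proof (intro ballI)
  fix a b assume ab: "a \<in> D" "b \<in> D"
  show "\<exists>d\<in>D. ddvd D d a \<and> ddvd D d b \<and> (\<forall>c\<in>D. ddvd D c a \<and> ddvd D c b \<longrightarrow> ddvd D c d)"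
  proof (cases "b = 0")
    case True
    have "ddvd D a 0" "ddvd D a a" using smul_D_mem sub_0[OF smul_sub[OF D_sub]] by (auto simp: ddvd_iff)
    thus ?thesis using ab True by (intro bexI[of _ a]) auto
  next
    case False
    obtain d where d: "d \<in> D" "d \<noteq> 0" "st (dspan D {a, b}) = smul d D"
      using GP_T[OF assms ok2[OF ab False]] by blast
    have "a \<in> smul d D" "b \<in> smul d D" using T_incl[OF ok2[OF ab False]] d(3) by auto
    moreover have "ddvd D c d" if c: "c \<in> D" "ddvd D c a" "ddvd D c b" for c
    proof -
      have c0: "c \<noteq> 0" using c(3) False by (auto simp: ddvd_def)
      have "{a, b} \<subseteq> smul c D" using c by (auto simp: ddvd_iff)
      hence "st (dspan D {a, b}) \<subseteq> smul c D" using T_least[OF ok2[OF ab False] star_ideal_princ[OF c0]] by simp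
      thus ?thesis using d(3) smul_D_mem by (auto simp: ddvd_iff)
    qed
    ultimately show ?thesis using d(1) by (auto simp: ddvd_iff)
  qed
qed

lemma gcd_field: assumes "\<forall>x\<in>D. x \<noteq> 0 \<longrightarrow> dunit D x" shows "gcd_domain D"
  unfolding gcd_domain_def
proof (intro ballI)
  fix a b assume ab: "a \<in> D" "b \<in> D"
  show "\<exists>d\<in>D. ddvd D d a \<and> ddvd D d b \<and> (\<forall>c\<in>D. ddvd D c a \<and> ddvd D c b \<longrightarrow> ddvd D c d)"
  proof (cases "a = 0 \<and> b = 0")
    case True
    have "ddvd D 0 0" using zero unfolding ddvd_def by (intro bexI[of _ 0]) auto
    thus ?thesis using True zero by (intro bexI[of _ 0]) auto
  next
    case False
    have "ddvd D c 1" if c: "c \<in> D" "ddvd D c a" "ddvd D c b" for c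
    proof -
      have "c \<noteq> 0" using c False by (auto simp: ddvd_def)
      hence "inverse c \<in> D" using assms c(1) by (auto simp: dunit_def)
      thus ?thesis using \<open>c \<noteq> 0\<close> unfolding ddvd_def by (intro bexI[of _ "inverse c"]) auto
    qed
    thus ?thesis using ab by (intro bexI[of _ 1]) (auto simp: ddvd_def)
  qed
qed

lemma intersection_GP: assumes GP shows "D = \<Inter>{localization D P | P. maximal_star_ideal D st P}"
proof
  show "D \<subseteq> \<Inter>{localization D P | P. maximal_star_ideal D st P}"
  proof (intro subsetI InterI)
    fix a X assume "a \<in> D" "X \<in> {localization D P | P. maximal_star_ideal D st P}"
    then obtain P where "X = localization D P" "maximal_star_ideal D st P" by blast
    thus "a \<in> X" using locI[OF \<open>a \<in> D\<close> one, of P a] max_one by simp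
  qed
  show "\<Inter>{localization D P | P. maximal_star_ideal D st P} \<subseteq> D"
  proof
    fix x assume x: "x \<in> \<Inter>{localization D P | P. maximal_star_ideal D st P}"
    obtain a b where ab: "a \<in> D" "b \<in> D" "b \<noteq> 0" "x = a / b" using frac[of x] by blast
    obtain d a' b' where r: "d \<in> D" "d \<noteq> 0" "a' \<in> D" "b' \<in> D" "a = d * a'" "b = d * b'" "b' \<noteq> 0"
      "st (dspan D {a', b'}) = D" using coprime_rep[OF assms(1) ab(1-3)] by blast
    have x': "x = a' / b'" using ab r by simp
    show "x \<in> D"
    proof (cases "dunit D b'")
      case True
      hence "a' * inverse b' \<in> D" using r(3) by (auto simp: dunit_def)
      thus ?thesis using x' by (simp add: divide_inverse)
    next
      case False
      obtain P where P: "maximal_star_ideal D st P" "b' \<in> P" using max_elem[OF r(4,7) False] by blast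
      have "x \<in> localization D P" using x P(1) by blast
      then obtain c s where cs: "c \<in> D" "s \<in> D" "s \<notin> P" "x = c / s" by (auto simp: localization_def)
      have s0: "s \<noteq> 0" using cs(3) sub_0[OF max_sub[OF P(1)]] by auto
      have "a' * s = c * b'" using x' cs(4) s0 r(7) by (simp add: field_simps)
      moreover have "c * b' \<in> P" using max_mult[OF P(1) P(2) cs(1)] by (simp add: mult.commute)
      ultimately have "a' \<in> P" using max_prime[OF P(1) r(3) cs(2)] cs(3) by auto
      thus ?thesis using T2_not_both[OF r(8) ok2[OF r(3,4,7)] P(1) _ P(2)] by blast
    qed
  qed
qed

end


context star begin

lemma homog_unique: assumes h: "star_homog D st (smul y D)" and P: "maximal_star_ideal D st P"
  and Q: "maximal_star_ideal D st Q" and yP: "y \<in> P" and yQ: "y \<in> Q" shows "P = Q"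
proof (rule ccontr)
  assume ne: "P \<noteq> Q"
  have sft: "star_fin_type D st (smul y D)" using h by (simp add: star_homog_def)
  have y0: "y \<noteq> 0" using sft frac_principal_nz by (simp add: star_fin_type_def star_ideal_def)
  have yD: "y \<in> D" using yP max_int[OF P] by blast
  have "\<not> Q \<subseteq> P"
  proof
    assume "Q \<subseteq> P"
    hence "P = Q" using max_max[OF Q max_star[OF P] max_int[OF P]] P by (simp add: maximal_star_ideal_def)
    thus False using ne by simp
  qed
  then obtain a where a: "a \<in> Q" "a \<notin> P" by blast
  have aD: "a \<in> D" using a max_int[OF Q] by blast
  have a0: "a \<noteq> 0" using a(2) sub_0[OF max_sub[OF P]] by auto
  have aDD: "smul a D \<subseteq> D" using principal_sub[OF D_sub] aD by simp
  have fr: "frac_ideal D (isum P (smul a D))"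
    using isum_frac_int[OF max_frac[OF P] frac_principal[OF a0] max_int[OF P] aDD] .
  have "1 \<in> st (isum P (smul a D))" using max_isum[OF P aD a(2)] by simp
  then obtain J where J: "frac_ideal D J" "fin_gen D J" "J \<subseteq> isum P (smul a D)" "1 \<in> st J"
    using fc fr unfolding finite_character_def by blast
  obtain F where F: "finite F" "J = dspan D F" using J(2) by (auto simp: fin_gen_def)
  have FJ: "F \<subseteq> isum P (smul a D)" using J(3) F(2) dspan_incl by blast
  define pf where "pf f = (SOME p. p \<in> P \<and> (\<exists>r\<in>D. f = p + a * r))" for f
  have pf: "pf f \<in> P \<and> (\<exists>r\<in>D. f = pf f + a * r)" if "f \<in> F" for f
  proof -
    have "f \<in> isum P (smul a D)" using FJ that by blast
    then obtain p b where pb: "p \<in> P" "b \<in> smul a D" "f = p + b" unfolding isum_def by blast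
    then obtain r where "r \<in> D" "b = a * r" unfolding smul_def by blast
    hence "\<exists>p. p \<in> P \<and> (\<exists>r\<in>D. f = p + a * r)" using pb by blast
    thus ?thesis unfolding pf_def by (rule someI_ex)
  qed
  define G where "G = insert y (pf ` F)"
  have GP': "G \<subseteq> P" using pf yP by (auto simp: G_def)
  have okG: "ok G" using GP' max_int[OF P] y0 by (intro okI[of _ y]) (auto simp: G_def)
  have finG: "finite G" using F(1) by (simp add: G_def)
  have okB: "ok {y, a}" using yD aD y0 by (intro okI[of _ y]) auto
  define A where "A = st (dspan D G)"
  define B where "B = st (dspan D {y, a})"
  have AP: "A \<subseteq> P" unfolding A_def using T_least[OF okG max_star[OF P] GP'] .
  have BQ: "B \<subseteq> Q" unfolding B_def using T_least[OF okB max_star[OF Q]] yQ a(1) by simp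
  have AnD: "A \<noteq> D" using AP max_one[OF P] by auto
  have BnD: "B \<noteq> D" using BQ max_one[OF Q] by auto
  have subA: "dsubmodule D A" unfolding A_def using st_sub[OF ok_frac[OF okG]] .
  have subB: "dsubmodule D B" unfolding B_def using st_sub[OF ok_frac[OF okB]] .
  have yA: "y \<in> A" using T_incl[OF okG] by (auto simp: A_def G_def)
  have yB: "y \<in> B" using T_incl[OF okB] by (auto simp: B_def)
  have aB: "a \<in> B" using T_incl[OF okB] by (auto simp: B_def)
  have c1: "star_fin_type D st A" "A \<subseteq> D" unfolding A_def using T_fin[OF okG finG] T_int[OF okG] by auto
  have c2: "star_fin_type D st B" "B \<subseteq> D" unfolding B_def using T_fin[OF okB] T_int[OF okB] by auto
  have c3: "smul y D \<subseteq> A" "smul y D \<subseteq> B" using principal_sub[OF subA] principal_sub[OF subB] yA yB by auto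
  have "st (isum A B) \<noteq> D"
    using h c1 c2 c3 AnD BnD unfolding star_homog_def by blast
  moreover have "st (isum A B) = D"
  proof -
    have "F \<subseteq> isum A B"
    proof
      fix f assume "f \<in> F"
      then obtain r where r: "r \<in> D" "f = pf f + a * r" using pf by blast
      have "pf f \<in> A" using T_incl[OF okG] \<open>f \<in> F\<close> by (auto simp: A_def G_def)
      moreover have "a * r \<in> B" using sub_mult'[OF subB r(1) aB] .
      ultimately show "f \<in> isum A B" using r(2) by (auto simp: isum_def)
    qed
    hence JAB: "J \<subseteq> isum A B" using F(2) dspan_least[OF isum_sub[OF subA subB]] by simp
    have frAB: "frac_ideal D (isum A B)"
      using isum_frac_int[OF T_frac[OF okG] T_frac[OF okB] T_int[OF okG] T_int[OF okB]] by (simp add: A_def B_def)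
    have intAB: "isum A B \<subseteq> D"
      using isum_least[OF D_sub] T_int[OF okG] T_int[OF okB] by (simp add: A_def B_def)
    have "1 \<in> st (isum A B)" using st_mono[OF J(1) frAB JAB] J(4) by blast
    thus ?thesis using star_int_one[OF star_ideal_st[OF frAB] st_int[OF frAB intAB]] by simp
  qed
  ultimately show False by simp
qed

definition uniq :: "'k \<Rightarrow> bool" where
  "uniq y \<longleftrightarrow> (\<forall>P Q. maximal_star_ideal D st P \<and> maximal_star_ideal D st Q \<and> y \<in> P \<and> y \<in> Q \<longrightarrow> P = Q)"
definition sm :: "'k \<Rightarrow> bool" where
  "sm y \<longleftrightarrow> y \<in> D \<and> y \<noteq> 0 \<and> (\<exists>P. maximal_star_ideal D st P \<and> y \<in> P) \<and> uniq y"
definition mx :: "'k \<Rightarrow> 'k set" where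
  "mx y = (THE P. maximal_star_ideal D st P \<and> y \<in> P)"

lemma mx: assumes "sm y" shows "maximal_star_ideal D st (mx y)" "y \<in> mx y"
proof -
  obtain P where P: "maximal_star_ideal D st P" "y \<in> P" using assms by (auto simp: sm_def)
  have u: "uniq y" using assms by (simp add: sm_def)
  have "\<And>Q. maximal_star_ideal D st Q \<and> y \<in> Q \<Longrightarrow> Q = P" using u P unfolding uniq_def by blast
  hence "mx y = P" unfolding mx_def using P by (intro the_equality) blast+
  thus "maximal_star_ideal D st (mx y)" "y \<in> mx y" using P by auto
qed

lemma mx_eq: assumes "sm y" "maximal_star_ideal D st P" "y \<in> P" shows "mx y = P"
proof -
  have u: "uniq y" using assms by (simp add: sm_def)
  show ?thesis using u mx[OF assms(1)] assms(2,3) unfolding uniq_def by blast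
qed

lemma sm_D: "sm y \<Longrightarrow> y \<in> D" and sm_nz: "sm y \<Longrightarrow> y \<noteq> 0" by (auto simp: sm_def)

lemma fh_sm: assumes "star_f_homog_elem D st y" shows "sm y"
proof -
  have yD: "y \<in> D" and h: "star_homog D st (smul y D)" using assms
    by (auto simp: star_f_homog_elem_def star_f_homog_def)
  have y0: "y \<noteq> 0" using h frac_principal_nz by (simp add: star_homog_def star_fin_type_def star_ideal_def)
  have "smul y D \<noteq> D" using h by (simp add: star_homog_def)
  hence "\<not> dunit D y" using unit_iff[OF yD y0] by simp
  hence "\<exists>P. maximal_star_ideal D st P \<and> y \<in> P" using max_elem[OF yD y0] by blast
  moreover have "uniq y" unfolding uniq_def using homog_unique[OF h] by blast
  ultimately show ?thesis using yD y0 by (simp add: sm_def)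
qed

lemma sm_fh: assumes GP "sm y" shows "star_f_homog_elem D st y"
proof -
  have yD: "y \<in> D" and y0: "y \<noteq> 0" using assms(2) by (auto simp: sm_def)
  note M = mx[OF assms(2)]
  have f1: "frac_ideal D (dspan D {y})" using dspan_frac[of "{y}" y] yD y0 by auto
  have f2: "fin_gen D (dspan D {y})" unfolding fin_gen_def by blast
  have f3: "smul y D = st (dspan D {y})" using T_princ[OF y0] by simp
  have sft: "star_fin_type D st (smul y D)"
    unfolding star_fin_type_def using star_ideal_princ[OF y0] f1 f2 f3 by blast
  have int: "smul y D \<subseteq> D" using principal_sub[OF D_sub] yD by simp
  have nD: "smul y D \<noteq> D"
  proof
    assume "smul y D = D" hence "dunit D y" using unit_iff[OF yD y0] by simp
    thus False using max_unit[OF M(1)] M(2) by blast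
  qed
  have hom: "st (isum A B) \<noteq> D" if AB: "star_fin_type D st A" "A \<subseteq> D" "A \<noteq> D"
    "star_fin_type D st B" "B \<subseteq> D" "B \<noteq> D" "smul y D \<subseteq> A" "smul y D \<subseteq> B" for A B
  proof -
    have sA: "star_ideal D st A" and sB: "star_ideal D st B" using AB by (auto simp: star_fin_type_def)
    obtain PA where PA: "maximal_star_ideal D st PA" "A \<subseteq> PA" using zorn[OF sA AB(2,3)] by blast
    obtain PB where PB: "maximal_star_ideal D st PB" "B \<subseteq> PB" using zorn[OF sB AB(5,6)] by blast
    have "PA = mx y" using mx_eq[OF assms(2) PA(1)] PA(2) AB(7) smul_D_mem by blast
    moreover have "PB = mx y" using mx_eq[OF assms(2) PB(1)] PB(2) AB(8) smul_D_mem by blast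
    ultimately have sub: "isum A B \<subseteq> mx y" using isum_least[OF max_sub[OF M(1)]] PA PB by auto
    have fA: "frac_ideal D A" and fB: "frac_ideal D B" using sA sB by (auto simp: star_ideal_def)
    have "st (isum A B) \<subseteq> mx y"
      using st_mono[OF isum_frac_int[OF fA fB AB(2,5)] max_frac[OF M(1)] sub] max_st[OF M(1)] by simp
    thus ?thesis using max_one[OF M(1)] by auto
  qed
  have "star_homog D st (smul y D)" unfolding star_homog_def using sft int nD hom by blast
  thus ?thesis using assms(1) yD unfolding star_f_homog_elem_def star_f_homog_def GP_def by blast
qed

lemma sm_mult: assumes "sm y" "sm z" "mx y = mx z" shows "sm (y * z)" "mx (y * z) = mx y"
proof -
  note My = mx[OF assms(1)] and Mz = mx[OF assms(2)]
  have yzD: "y * z \<in> D" using sm_D assms by auto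
  have yz0: "y * z \<noteq> 0" using sm_nz assms by auto
  have yzin: "y * z \<in> mx y" using max_mult[OF My(1) My(2)] sm_D[OF assms(2)] .
  have all: "P = mx y" if "maximal_star_ideal D st P" "y * z \<in> P" for P
    using max_prime[OF that(1) sm_D[OF assms(1)] sm_D[OF assms(2)] that(2)]
      mx_eq[OF assms(1) that(1)] mx_eq[OF assms(2) that(1)] assms(3) by auto
  show "sm (y * z)" unfolding sm_def uniq_def using yzD yz0 yzin My(1) all by blast
  thus "mx (y * z) = mx y" using mx_eq My(1) yzin by blast
qed

lemma sm_unit: assumes "sm y" "dunit D u" shows "sm (u * y)" "mx (u * y) = mx y"
proof -
  note My = mx[OF assms(1)]
  have uD: "u \<in> D" "u \<noteq> 0" using assms(2) by (auto simp: dunit_def)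
  have uyD: "u * y \<in> D" using sm_D[OF assms(1)] uD by auto
  have uy0: "u * y \<noteq> 0" using sm_nz[OF assms(1)] uD by auto
  have uyin: "u * y \<in> mx y" using max_mult[OF My(1) My(2) uD(1)] by (simp add: mult.commute)
  have all: "P = mx y" if "maximal_star_ideal D st P" "u * y \<in> P" for P
    using max_prime[OF that(1) uD(1) sm_D[OF assms(1)] that(2)] max_unit[OF that(1) assms(2)]
      mx_eq[OF assms(1) that(1)] by auto
  show "sm (u * y)" unfolding sm_def uniq_def using uyD uy0 uyin My(1) all by blast
  thus "mx (u * y) = mx y" using mx_eq My(1) uyin by blast
qed

lemma comax_of: assumes "a \<in> D" "b \<in> D" "b \<noteq> 0"
  "\<not> (\<exists>P. maximal_star_ideal D st P \<and> a \<in> P \<and> b \<in> P)"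
  shows "star_comax D st (smul a D) (smul b D)"
  unfolding star_comax_def isum_principal
proof (rule ccontr)
  assume ne: "st (dspan D {a, b}) \<noteq> D"
  note ok = ok2[OF assms(1-3)]
  obtain P where "maximal_star_ideal D st P" "st (dspan D {a, b}) \<subseteq> P"
    using zorn[OF T_star[OF ok] T_int[OF ok] ne] by blast
  thus False using T_incl[OF ok] assms(4) by blast
qed

lemma comax_not: assumes "star_comax D st (smul a D) (smul b D)" "a \<in> D" "b \<in> D" "b \<noteq> 0"
  "maximal_star_ideal D st P" "a \<in> P" "b \<in> P" shows False
  using T2_not_both[OF _ ok2[OF assms(2-4)] assms(5-7)] assms(1) by (simp add: star_comax_def isum_principal)

lemma gauss: assumes "a \<in> D" "r \<in> D" "y \<in> D" "a \<noteq> 0" "st (dspan D {a, r}) = D" "ddvd D a (y * r)"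
  shows "ddvd D a y"
proof (cases "y = 0")
  case True thus ?thesis using assms(1) by (auto simp: ddvd_def intro: bexI[of _ 0])
next
  case False
  have ok: "ok {a, r}" using assms by (intro okI[of _ a]) auto
  have ok': "ok {y * a, y * r}" using assms False by (intro okI[of _ "y * a"]) auto
  have "smul y (st (dspan D {a, r})) = st (dspan D {y * a, y * r})" using T_smul[OF False ok] by simp
  moreover have "{y * a, y * r} \<subseteq> smul a D" using assms(6) smul_mem[OF assms(3), of a]
    by (auto simp: ddvd_iff mult.commute)
  ultimately have "smul y D \<subseteq> smul a D"
    using T_least[OF ok' star_ideal_princ[OF assms(4)]] assms(5) by simp
  thus ?thesis using smul_D_mem by (auto simp: ddvd_iff)
qed

lemma assoc_of_dvd: assumes "a \<noteq> 0" "b \<noteq> 0" "ddvd D a b" "ddvd D b a" shows "dassoc D a b"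
proof -
  have "smul b D \<subseteq> smul a D" "smul a D \<subseteq> smul b D"
    using assms(3,4) principal_sub[OF smul_sub[OF D_sub]] by (auto simp: ddvd_iff)
  thus ?thesis using principal_eq_assoc[OF assms(1,2)] by blast
qed

end


context star begin

lemma iprod_principal: "iprod D (smul a D) (smul b D) = smul (a * b) D"
proof
  show "iprod D (smul a D) (smul b D) \<subseteq> smul (a * b) D"
    unfolding iprod_def
  proof (rule dspan_least[OF smul_sub[OF D_sub]], rule subsetI)
    fix z assume "z \<in> {p * q |p q. p \<in> smul a D \<and> q \<in> smul b D}"
    then obtain p q where pq: "p \<in> smul a D" "q \<in> smul b D" "z = p * q" by blast
    obtain d where d: "d \<in> D" "p = a * d" using pq(1) unfolding smul_def by blast
    obtain e where e: "e \<in> D" "q = b * e" using pq(2) unfolding smul_def by blast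
    have de: "d \<in> D" "e \<in> D" "z = (a * d) * (b * e)" using d e pq(3) by auto
    hence "z = (a * b) * (d * e)" by (simp add: ac_simps)
    moreover have "(a * b) * (d * e) \<in> smul (a * b) D" using de by (intro smul_mem) auto
    ultimately show "z \<in> smul (a * b) D" by simp
  qed
  have "a \<in> smul a D" "b \<in> smul b D" by (rule smul_D_mem)+
  hence "a * b \<in> {p * q |p q. p \<in> smul a D \<and> q \<in> smul b D}" by blast
  hence "a * b \<in> iprod D (smul a D) (smul b D)" unfolding iprod_def by (rule subsetD[OF dspan_incl])
  thus "smul (a * b) D \<subseteq> iprod D (smul a D) (smul b D)"
    unfolding iprod_def using principal_sub[OF dspan_sub] by blast
qed

lemma iprod_list_principal: "iprod_list D (map (\<lambda>y. smul y D) ys) = smul (prod_list ys) D"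
proof (induction ys)
  case Nil thus ?case by (simp add: iprod_list_def)
next
  case (Cons y ys)
  have "iprod_list D (map (\<lambda>y. smul y D) (y # ys)) = iprod D (smul y D) (iprod_list D (map (\<lambda>y. smul y D) ys))"
    by (simp add: iprod_list_def)
  also have "\<dots> = smul (prod_list (y # ys)) D" using Cons iprod_principal by simp
  finally show ?case .
qed

lemma prod_nz: "\<forall>y\<in>set ys. y \<noteq> (0::'k) \<Longrightarrow> prod_list ys \<noteq> 0"
  by (induction ys) auto

lemma hyp_decomp: assumes "star_prod_fhomog D st x" "x \<in> D" "x \<noteq> 0" "\<not> dunit D x"
  obtains u ys where "dunit D u" "ys \<noteq> []" "\<forall>y\<in>set ys. star_f_homog_elem D st y" "x = u * prod_list ys"
proof -
  obtain Is where Is: "\<forall>I\<in>set Is. star_f_homog D st I" "smul x D = st (iprod_list D Is)"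
    using assms(1) by (auto simp: star_prod_fhomog_def)
  define g where "g I = (SOME y. y \<in> D \<and> y \<noteq> 0 \<and> I = smul y D)" for I
  have g: "g I \<in> D \<and> g I \<noteq> 0 \<and> I = smul (g I) D" if "I \<in> set Is" for I
  proof -
    have "star_f_homog D st I" using Is(1) that by blast
    then obtain y where "y \<in> D" "y \<noteq> 0" "I = smul y D" by (rule fh_principal)
    hence "\<exists>y. y \<in> D \<and> y \<noteq> 0 \<and> I = smul y D" by blast
    thus ?thesis unfolding g_def by (rule someI_ex)
  qed
  define ys where "ys = map g Is"
  have m: "map (\<lambda>y. smul y D) ys = Is" unfolding ys_def map_map
  proof (rule map_idI)
    fix I assume "I \<in> set Is" thus "((\<lambda>y. smul y D) \<circ> g) I = I" using g by simp
  qed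
  have fh: "\<forall>y\<in>set ys. star_f_homog_elem D st y"
  proof
    fix y assume "y \<in> set ys"
    then obtain I where I: "I \<in> set Is" "y = g I" unfolding ys_def by auto
    thus "star_f_homog_elem D st y" unfolding star_f_homog_elem_def using g[OF I(1)] Is(1) by auto
  qed
  have nz: "\<forall>y\<in>set ys. y \<noteq> 0"
  proof
    fix y assume "y \<in> set ys"
    then obtain I where I: "I \<in> set Is" "y = g I" unfolding ys_def by auto
    thus "y \<noteq> 0" using g[OF I(1)] by simp
  qed
  have p0: "prod_list ys \<noteq> 0" using prod_nz[OF nz] .
  have "smul x D = st (iprod_list D (map (\<lambda>y. smul y D) ys))" using Is(2) m by simp
  also have "\<dots> = smul (prod_list ys) D" using iprod_list_principal st_princ[OF p0] by simp
  finally have "smul x D = smul (prod_list ys) D" .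
  hence "dassoc D (prod_list ys) x" using principal_eq_assoc[OF p0 assms(3)] by simp
  then obtain u where u: "dunit D u" "x = u * prod_list ys" by (auto simp: dassoc_def)
  have "ys \<noteq> []"
  proof
    assume "ys = []"
    hence "x = u" using u(2) by simp
    thus False using u(1) assms(4) by blast
  qed
  thus ?thesis using that u fh by blast
qed

lemma prod_update: "k < length xs \<Longrightarrow> prod_list (xs[k := c * xs ! k]) = c * prod_list (xs :: 'k list)"
proof (induction xs arbitrary: k)
  case Nil thus ?case by simp
next
  case (Cons a xs)
  thus ?case by (cases k) (auto simp: ac_simps)
qed

lemma map_mx_update: assumes "k < length zs" "mx v = mx (zs ! k)" shows "map mx (zs[k := v]) = map mx zs"
proof -
  have "map mx (zs[k := v]) = (map mx zs)[k := mx v]" by (rule map_update)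
  also have "\<dots> = (map mx zs)[k := (map mx zs) ! k]" using assms by simp
  also have "\<dots> = map mx zs" by simp
  finally show ?thesis .
qed

lemma build: assumes "ys \<noteq> []" "\<forall>y\<in>set ys. sm y"
  shows "\<exists>zs. zs \<noteq> [] \<and> (\<forall>z\<in>set zs. sm z) \<and> distinct (map mx zs) \<and> prod_list zs = prod_list ys"
  using assms
proof (induction ys)
  case Nil thus ?case by simp
next
  case (Cons y ys)
  show ?case
  proof (cases "ys = []")
    case True thus ?thesis using Cons.prems by (intro exI[of _ "[y]"]) auto
  next
    case False
    then obtain zs where zs: "zs \<noteq> []" "\<forall>z\<in>set zs. sm z" "distinct (map mx zs)" "prod_list zs = prod_list ys"
      using Cons by auto
    have smy: "sm y" using Cons.prems by simp
    show ?thesis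
    proof (cases "mx y \<in> set (map mx zs)")
      case True
      then obtain k where k: "k < length zs" "mx (zs ! k) = mx y"
        by (auto simp: in_set_conv_nth)
      have smk: "sm (zs ! k)" using zs(2) k(1) by simp
      have s1: "sm (y * zs ! k)" "mx (y * zs ! k) = mx y" using sm_mult[OF smy smk k(2)[symmetric]] by auto
      define zs' where "zs' = zs[k := y * zs ! k]"
      have "set zs' \<subseteq> insert (y * zs ! k) (set zs)" unfolding zs'_def by (rule set_update_subset_insert)
      hence a: "\<forall>z\<in>set zs'. sm z" using zs(2) s1(1) by blast
      have b: "distinct (map mx zs')" unfolding zs'_def using map_mx_update[OF k(1)] s1(2) k(2) zs(3) by simp
      have c: "prod_list zs' = prod_list (y # ys)" unfolding zs'_def using prod_update[OF k(1)] zs(4) by simp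
      have "zs' \<noteq> []" using zs(1) by (simp add: zs'_def)
      thus ?thesis using a b c by blast
    next
      case False
      thus ?thesis using zs smy by (intro exI[of _ "y # zs"]) auto
    qed
  qed
qed

lemma coprime_notin: assumes "sm a" "r \<in> D" "r \<notin> mx a" shows "st (dspan D {a, r}) = D"
proof (rule ccontr)
  assume ne: "st (dspan D {a, r}) \<noteq> D"
  have ok: "ok {a, r}" using sm_D[OF assms(1)] sm_nz[OF assms(1)] assms(2) by (intro okI[of _ a]) auto
  obtain P where P: "maximal_star_ideal D st P" "st (dspan D {a, r}) \<subseteq> P"
    using zorn[OF T_star[OF ok] T_int[OF ok] ne] by blast
  have "a \<in> P" "r \<in> P" using T_incl[OF ok] P(2) by auto
  thus False using mx_eq[OF assms(1) P(1)] assms(3) by simp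
qed

lemma distinct_comax: assumes "\<forall>z\<in>set zs. sm z" "distinct (map mx zs)"
  shows "\<forall>i<length zs. \<forall>j<length zs. i \<noteq> j \<longrightarrow> star_comax D st (smul (zs ! i) D) (smul (zs ! j) D)"
proof (intro allI impI)
  fix i j assume ij: "i < length zs" "j < length zs" "i \<noteq> j"
  have si: "sm (zs ! i)" and sj: "sm (zs ! j)" using assms(1) ij by auto
  have ne: "mx (zs ! i) \<noteq> mx (zs ! j)" using assms(2) ij by (auto simp: distinct_conv_nth)
  show "star_comax D st (smul (zs ! i) D) (smul (zs ! j) D)"
  proof (rule comax_of[OF sm_D[OF si] sm_D[OF sj] sm_nz[OF sj]])
    show "\<not> (\<exists>P. maximal_star_ideal D st P \<and> zs ! i \<in> P \<and> zs ! j \<in> P)"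
      using mx_eq[OF si] mx_eq[OF sj] ne by metis
  qed
qed

lemma fact_sm: assumes "comax_fhomog_fact D st x ys" shows "\<forall>y\<in>set ys. sm y" "distinct (map mx ys)"
proof -
  show a: "\<forall>y\<in>set ys. sm y" using assms fh_sm by (auto simp: comax_fhomog_fact_def)
  show "distinct (map mx ys)"
    unfolding distinct_conv_nth
  proof (intro allI impI)
    fix i j assume ij: "i < length (map mx ys)" "j < length (map mx ys)" "i \<noteq> j"
    hence ij': "i < length ys" "j < length ys" by auto
    have si: "sm (ys ! i)" and sj: "sm (ys ! j)" using a ij' by auto
    have c: "star_comax D st (smul (ys ! i) D) (smul (ys ! j) D)"
      using assms ij' ij(3) by (auto simp: comax_fhomog_fact_def)
    show "map mx ys ! i \<noteq> map mx ys ! j"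
    proof
      assume "map mx ys ! i = map mx ys ! j"
      hence e: "mx (ys ! i) = mx (ys ! j)" using ij' by simp
      show False using comax_not[OF c sm_D[OF si] sm_D[OF sj] sm_nz[OF sj] mx(1)[OF si] mx(2)[OF si]]
        mx(2)[OF sj] e by simp
    qed
  qed
qed

lemma dvd_prod_list: "set ys \<subseteq> D \<Longrightarrow> y \<in> set ys \<Longrightarrow> ddvd D y (prod_list ys)"
proof (induction ys)
  case Nil thus ?case by simp
next
  case (Cons a ys)
  show ?case
  proof (cases "y = a")
    case True thus ?thesis using Cons.prems prod_list_in[of ys] by (auto simp: ddvd_def)
  next
    case False
    hence "ddvd D y (prod_list ys)" using Cons by auto
    then obtain k where "k \<in> D" "prod_list ys = y * k" by (auto simp: ddvd_def)
    thus ?thesis using Cons.prems unfolding ddvd_def by (intro bexI[of _ "a * k"]) (auto simp: ac_simps)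
  qed
qed

lemma fact_max: assumes "comax_fhomog_fact D st x ys"
  shows "set (map mx ys) = {P. maximal_star_ideal D st P \<and> x \<in> P}"
proof -
  have sm: "\<forall>y\<in>set ys. sm y" using fact_sm[OF assms] by simp
  have sD: "set ys \<subseteq> D" using sm sm_D by blast
  have px: "prod_list ys = x" using assms by (simp add: comax_fhomog_fact_def)
  show ?thesis
  proof
    show "set (map mx ys) \<subseteq> {P. maximal_star_ideal D st P \<and> x \<in> P}"
    proof
      fix P assume "P \<in> set (map mx ys)"
      then obtain y where y: "y \<in> set ys" "P = mx y" by auto
      obtain k where "k \<in> D" "x = y * k" using dvd_prod_list[OF sD y(1)] px by (auto simp: ddvd_def)
      hence "x \<in> mx y" using max_mult[OF mx(1) mx(2)] sm y(1) by auto
      thus "P \<in> {P. maximal_star_ideal D st P \<and> x \<in> P}" using mx(1) sm y by auto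
    qed
    show "{P. maximal_star_ideal D st P \<and> x \<in> P} \<subseteq> set (map mx ys)"
    proof
      fix P assume "P \<in> {P. maximal_star_ideal D st P \<and> x \<in> P}"
      hence P: "maximal_star_ideal D st P" "x \<in> P" by auto
      obtain y where "y \<in> set ys" "y \<in> P" using max_prod_list[OF P(1) sD] P(2) px by auto
      thus "P \<in> set (map mx ys)" using mx_eq[OF _ P(1)] sm by force
    qed
  qed
qed

lemma split_prod: "i < length xs \<Longrightarrow> prod_list xs = xs ! i * prod_list (take i xs @ drop (Suc i) (xs :: 'k list))"
proof -
  assume i: "i < length xs"
  have "prod_list xs = prod_list (take i xs @ xs ! i # drop (Suc i) xs)" using id_take_nth_drop[OF i] by metis
  thus ?thesis by (simp add: ac_simps)
qed

lemma split_distinct: assumes "distinct (map f xs)" "i < length xs" "z \<in> set (take i xs @ drop (Suc i) xs)"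
  shows "f z \<noteq> f (xs ! i)"
proof -
  have "distinct (map f (take i xs @ xs ! i # drop (Suc i) xs))" using assms(1) id_take_nth_drop[OF assms(2)] by metis
  hence "f (xs ! i) \<notin> f ` set (take i xs) \<union> f ` set (drop (Suc i) xs)" by simp
  thus ?thesis using assms(3) by (metis Un_iff image_eqI set_append)
qed

lemma rest_notin: assumes "\<forall>y\<in>set xs. sm y" "distinct (map mx xs)" "i < length xs"
  shows "prod_list (take i xs @ drop (Suc i) xs) \<notin> mx (xs ! i)"
proof -
  have smi: "sm (xs ! i)" using assms by simp
  have sub: "set (take i xs @ drop (Suc i) xs) \<subseteq> set xs" by (auto dest: in_set_takeD in_set_dropD)
  hence sD: "set (take i xs @ drop (Suc i) xs) \<subseteq> D" using assms(1) sm_D by blast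
  have "\<forall>z\<in>set (take i xs @ drop (Suc i) xs). z \<notin> mx (xs ! i)"
  proof
    fix z assume z: "z \<in> set (take i xs @ drop (Suc i) xs)"
    have "mx z \<noteq> mx (xs ! i)" using split_distinct[OF assms(2,3) z] .
    thus "z \<notin> mx (xs ! i)" using mx_eq[OF _ mx(1)[OF smi]] assms(1) sub z by blast
  qed
  thus ?thesis using max_prod_list_not[OF mx(1)[OF smi] sD] by blast
qed

lemma uniqueness: assumes "comax_fhomog_fact D st x xs" "comax_fhomog_fact D st x ys"
  shows "length ys = length xs \<and> (\<exists>\<sigma>. bij_betw \<sigma> {..<length xs} {..<length xs} \<and>
                        (\<forall>i<length xs. dassoc D (xs ! i) (ys ! \<sigma> i)))"
proof -
  note sx = fact_sm[OF assms(1)] and sy = fact_sm[OF assms(2)]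
  have eqset: "set (map mx xs) = set (map mx ys)" using fact_max[OF assms(1)] fact_max[OF assms(2)] by simp
  have len: "length ys = length xs"
    using distinct_card[OF sx(2)] distinct_card[OF sy(2)] eqset by simp
  define n where "n = length xs"
  define \<sigma> where "\<sigma> i = (THE j. j < length ys \<and> mx (ys ! j) = mx (xs ! i))" for i
  have sig: "\<sigma> i < n \<and> mx (ys ! \<sigma> i) = mx (xs ! i)" if "i < n" for i
  proof -
    have "xs ! i \<in> set xs" using that by (simp add: n_def)
    hence "mx (xs ! i) \<in> set (map mx xs)" by simp
    hence "mx (xs ! i) \<in> set (map mx ys)" using eqset by simp
    then obtain j where j: "j < length ys" "mx (ys ! j) = mx (xs ! i)" by (auto simp: in_set_conv_nth)
    have "\<And>j'. j' < length ys \<and> mx (ys ! j') = mx (xs ! i) \<Longrightarrow> j' = j"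
      using sy(2) j by (auto simp: distinct_conv_nth)
    hence "\<sigma> i = j" unfolding \<sigma>_def using j by (intro the_equality) blast+
    thus ?thesis using j len by (simp add: n_def)
  qed
  have inj: "inj_on \<sigma> {..<n}"
  proof (rule inj_onI)
    fix i i' assume ii: "i \<in> {..<n}" "i' \<in> {..<n}" "\<sigma> i = \<sigma> i'"
    have "mx (xs ! i) = mx (ys ! \<sigma> i)" "mx (xs ! i') = mx (ys ! \<sigma> i')" using sig ii(1,2) by auto
    hence "mx (xs ! i) = mx (xs ! i')" "i < length xs" "i' < length xs" using ii by (auto simp: n_def)
    thus "i = i'" using sx(2) by (auto simp: distinct_conv_nth)
  qed
  have "\<sigma> ` {..<n} \<subseteq> {..<n}" using sig by auto
  hence "\<sigma> ` {..<n} = {..<n}" using endo_inj_surj[OF _ _ inj] by simp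
  hence bij: "bij_betw \<sigma> {..<n} {..<n}" using inj by (simp add: bij_betw_def)
  have ass: "dassoc D (xs ! i) (ys ! \<sigma> i)" if i: "i < n" for i
  proof -
    define j where "j = \<sigma> i"
    have j: "j < length ys" "mx (ys ! j) = mx (xs ! i)" using sig[OF i] len by (auto simp: j_def n_def)
    have i': "i < length xs" using i by (simp add: n_def)
    define a where "a = xs ! i"
    define b where "b = ys ! j"
    have sa: "sm a" and sb: "sm b" using sx(1) sy(1) i' j(1) by (auto simp: a_def b_def)
    define ra where "ra = prod_list (take i xs @ drop (Suc i) xs)"
    define rb where "rb = prod_list (take j ys @ drop (Suc j) ys)"
    have xa: "x = a * ra" using split_prod[OF i'] assms(1) by (simp add: comax_fhomog_fact_def a_def ra_def)
    have xb: "x = b * rb" using split_prod[OF j(1)] assms(2) by (simp add: comax_fhomog_fact_def b_def rb_def)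
    have "set (take i xs @ drop (Suc i) xs) \<subseteq> D" "set (take j ys @ drop (Suc j) ys) \<subseteq> D"
      using sx(1) sy(1) sm_D by (auto dest: in_set_takeD in_set_dropD)
    hence rD: "ra \<in> D" "rb \<in> D" unfolding ra_def rb_def using prod_list_in by blast+
    have ran: "ra \<notin> mx a" using rest_notin[OF sx i'] by (simp add: a_def ra_def)
    have rbn: "rb \<notin> mx b" using rest_notin[OF sy j(1)] by (simp add: b_def rb_def)
    have mab: "mx a = mx b" using j(2) by (simp add: a_def b_def)
    have "ddvd D a b"
      using gauss[OF sm_D[OF sa] rD(2) sm_D[OF sb] sm_nz[OF sa] coprime_notin[OF sa rD(2)]] rbn mab xa xb rD(1)
      by (auto simp: ddvd_def)
    moreover have "ddvd D b (a * ra)" unfolding ddvd_def using xa xb rD by (intro bexI[of _ rb]) auto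
    moreover have "ddvd D a (b * rb)" unfolding ddvd_def using xa xb rD by (intro bexI[of _ ra]) auto
    moreover have "ddvd D b a"
      using gauss[OF sm_D[OF sb] rD(1) sm_D[OF sa] sm_nz[OF sb] coprime_notin[OF sb rD(1)]] ran mab calculation(2)
      by simp
    ultimately show ?thesis using assoc_of_dvd sm_nz[OF sa] sm_nz[OF sb] by (simp add: a_def b_def j_def)
  qed
  show ?thesis using len bij ass by (auto simp: n_def)
qed

end


context star begin

lemma prime_prod_list: assumes "prime_ideal D R" "set xs \<subseteq> D" "prod_list xs \<in> R"
  shows "\<exists>x\<in>set xs. x \<in> R"
  using assms(2,3)
proof (induction xs)
  case Nil
  have "R \<subseteq> D" "dsubmodule D R" "R \<noteq> D" using assms(1) by (auto simp: prime_ideal_def)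
  thus ?case using Nil int_one by auto
next
  case (Cons a xs)
  have "\<forall>a\<in>D. \<forall>b\<in>D. a * b \<in> R \<longrightarrow> a \<in> R \<or> b \<in> R" using assms(1) by (simp add: prime_ideal_def)
  thus ?case using Cons prod_list_in[of xs] by auto
qed

lemma fwd_exists: assumes GP "x \<in> D" "dunit D u" "ys \<noteq> []" "\<forall>y\<in>set ys. sm y" "x = u * prod_list ys"
  shows "\<exists>xs. comax_fhomog_fact D st x xs"
proof -
  obtain zs where zs: "zs \<noteq> []" "\<forall>z\<in>set zs. sm z" "distinct (map mx zs)" "prod_list zs = prod_list ys"
    using build[OF assms(4,5)] by blast
  have k: "0 < length zs" using zs(1) by simp
  have s0: "sm (zs ! 0)" using zs(2) k by simp
  note su = sm_unit[OF s0 assms(3)]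
  define zs' where "zs' = zs[0 := u * zs ! 0]"
  have "set zs' \<subseteq> insert (u * zs ! 0) (set zs)" unfolding zs'_def by (rule set_update_subset_insert)
  hence a: "\<forall>z\<in>set zs'. sm z" using zs(2) su(1) by blast
  have b: "distinct (map mx zs')" unfolding zs'_def using map_mx_update[OF k su(2)] zs(3) by simp
  have c: "prod_list zs' = x" unfolding zs'_def using prod_update[OF k, of u] zs(4) assms(6) by simp
  have "comax_fhomog_fact D st x zs'"
    unfolding comax_fhomog_fact_def using a sm_fh[OF assms(1)] distinct_comax[OF a b] c by blast
  thus ?thesis by blast
qed

lemma no_max_field: assumes "\<forall>x\<in>D. x \<noteq> 0 \<longrightarrow> dunit D x" "maximal_star_ideal D st P" shows False
proof -
  obtain w where w: "w \<in> P" "w \<noteq> 0" using max_frac[OF assms(2)] by (rule frac_nz)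
  have "w \<in> D" using w max_int[OF assms(2)] by blast
  thus False using assms max_unit w by blast
qed

lemma forward: assumes H: "\<forall>x\<in>D. x \<noteq> 0 \<and> \<not> dunit D x \<longrightarrow> star_prod_fhomog D st x"
  shows "gcd_domain D \<and> star_IRKT D st \<and>
            (\<forall>x\<in>D. x \<noteq> 0 \<and> \<not> dunit D x \<longrightarrow>
               (\<exists>xs. comax_fhomog_fact D st x xs \<and>
                  (\<forall>ys. comax_fhomog_fact D st x ys \<longrightarrow>
                     length ys = length xs \<and>
                     (\<exists>\<sigma>. bij_betw \<sigma> {..<length xs} {..<length xs} \<and>
                        (\<forall>i<length xs. dassoc D (xs ! i) (ys ! \<sigma> i))))))"
proof -
  have dec: "\<exists>u ys. dunit D u \<and> ys \<noteq> [] \<and> (\<forall>y\<in>set ys. sm y) \<and> x = u * prod_list ys \<and> GP"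
    if x: "x \<in> D" "x \<noteq> 0" "\<not> dunit D x" for x
  proof -
    obtain u ys where u: "dunit D u" "ys \<noteq> []" "\<forall>y\<in>set ys. star_f_homog_elem D st y" "x = u * prod_list ys"
      using hyp_decomp[OF H[rule_format, OF x(1)] x] x by blast
    obtain y where "y \<in> set ys" using u(2) by (cases ys) auto
    hence "star_f_homog D st (smul y D)" using u(3) by (simp add: star_f_homog_elem_def)
    hence GP by (rule GP_from)
    thus ?thesis using u fh_sm by blast
  qed
  have fact: "\<exists>xs. comax_fhomog_fact D st x xs \<and>
                  (\<forall>ys. comax_fhomog_fact D st x ys \<longrightarrow>
                     length ys = length xs \<and>
                     (\<exists>\<sigma>. bij_betw \<sigma> {..<length xs} {..<length xs} \<and>
                        (\<forall>i<length xs. dassoc D (xs ! i) (ys ! \<sigma> i))))"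
    if x: "x \<in> D" "x \<noteq> 0" "\<not> dunit D x" for x
  proof -
    obtain u ys where u: "dunit D u" "ys \<noteq> []" "\<forall>y\<in>set ys. sm y" "x = u * prod_list ys" GP
      using dec[OF x] by blast
    obtain xs where "comax_fhomog_fact D st x xs" using fwd_exists[OF u(5) x(1) u(1-4)] by blast
    thus ?thesis using uniqueness by blast
  qed
  show ?thesis
  proof (cases "\<forall>x\<in>D. x \<noteq> 0 \<longrightarrow> dunit D x")
    case True
    have nm: "\<not> maximal_star_ideal D st P" for P using no_max_field[OF True] by blast
    have "D = UNIV"
    proof (intro set_eqI iffI)
      fix z :: 'k
      obtain a b where ab: "a \<in> D" "b \<in> D" "b \<noteq> 0" "z = a / b" using frac[of z] by blast
      have "inverse b \<in> D" using True ab by (auto simp: dunit_def)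
      hence "a * inverse b \<in> D" using ab(1) by (intro mult)
      thus "z \<in> D" using ab(4) by (simp add: divide_inverse)
    qed simp
    hence "star_IRKT D st" unfolding star_IRKT_def using nm by simp
    thus ?thesis using gcd_field[OF True] fact by blast
  next
    case False
    then obtain x0 where "x0 \<in> D" "x0 \<noteq> 0" "\<not> dunit D x0" by blast
    hence gp: GP using dec by blast
    have c3: "finite {P. maximal_star_ideal D st P \<and> x \<in> P}" if x: "x \<in> D" "x \<noteq> 0" for x
    proof (cases "dunit D x")
      case True
      hence "{P. maximal_star_ideal D st P \<and> x \<in> P} = {}" using max_unit by blast
      thus ?thesis by (simp only: finite.emptyI)
    next
      case False
      obtain u ys where u: "dunit D u" "ys \<noteq> []" "\<forall>y\<in>set ys. sm y" "x = u * prod_list ys"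
        using dec[OF x False] by blast
      have uD: "u \<in> D" using u(1) by (simp add: dunit_def)
      have sD: "set (u # ys) \<subseteq> D" using u(3) uD sm_D by auto
      have "{P. maximal_star_ideal D st P \<and> x \<in> P} \<subseteq> mx ` set ys"
      proof
        fix P assume "P \<in> {P. maximal_star_ideal D st P \<and> x \<in> P}"
        hence P: "maximal_star_ideal D st P" "prod_list (u # ys) \<in> P" using u(4) by auto
        obtain y where y: "y \<in> set (u # ys)" "y \<in> P" using max_prod_list[OF P(1) sD P(2)] by blast
        have "y \<noteq> u" using max_unit[OF P(1) u(1)] y(2) by blast
        hence "y \<in> set ys" using y(1) by simp
        thus "P \<in> mx ` set ys" using mx_eq[OF _ P(1) y(2)] u(3) by force
      qed
      thus ?thesis by (rule finite_subset) simp
    qed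
    have c4: "\<not> (R \<subseteq> P \<and> R \<subseteq> Q)" if PQR: "maximal_star_ideal D st P" "maximal_star_ideal D st Q" "P \<noteq> Q"
      "prime_ideal D R" "R \<noteq> {0}" for P Q R
    proof
      assume RPQ: "R \<subseteq> P \<and> R \<subseteq> Q"
      have Rsub: "dsubmodule D R" "R \<subseteq> D" "R \<noteq> D" using PQR(4) by (auto simp: prime_ideal_def)
      obtain r where r: "r \<in> R" "r \<noteq> 0" using PQR(5) sub_0[OF Rsub(1)] by blast
      have rD: "r \<in> D" using r Rsub(2) by blast
      have nu: "\<not> dunit D r" using max_unit[OF PQR(1)] RPQ r(1) by blast
      obtain u ys where u: "dunit D u" "ys \<noteq> []" "\<forall>y\<in>set ys. sm y" "r = u * prod_list ys"
        using dec[OF rD r(2) nu] by blast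
      have uD: "u \<in> D" using u(1) by (simp add: dunit_def)
      have sD: "set (u # ys) \<subseteq> D" using u(3) uD sm_D by auto
      obtain y where y: "y \<in> set (u # ys)" "y \<in> R" using prime_prod_list[OF PQR(4) sD] u(4) r(1) by auto
      have "y \<noteq> u" using max_unit[OF PQR(1) u(1)] y(2) RPQ by blast
      hence "y \<in> set ys" using y(1) by simp
      hence "sm y" using u(3) by blast
      hence "mx y = P" "mx y = Q" using mx_eq PQR(1,2) y(2) RPQ by blast+
      thus False using PQR(3) by simp
    qed
    have "star_IRKT D st" unfolding star_IRKT_def
      using valuation_GP[OF gp] intersection_GP[OF gp] c3 c4 by blast
    thus ?thesis using gcd_GP[OF gp] fact by blast
  qed
qed

end


context dom begin

lemma dvd_refl': "a \<in> D \<Longrightarrow> ddvd D a a" unfolding ddvd_def by (intro bexI[of _ 1]) auto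
lemma dvd_trans': assumes "ddvd D a b" "ddvd D b c" shows "ddvd D a c"
proof -
  obtain k where k: "k \<in> D" "b = a * k" using assms(1) by (auto simp: ddvd_def)
  obtain l where l: "l \<in> D" "c = b * l" using assms(2) by (auto simp: ddvd_def)
  have "c = a * (k * l)" using k l by (simp add: mult.assoc)
  thus ?thesis using k l unfolding ddvd_def by (intro bexI[of _ "k * l"]) auto
qed
lemma dvd_multr: assumes "ddvd D a b" "c \<in> D" shows "ddvd D a (b * c)"
proof -
  obtain k where k: "k \<in> D" "b = a * k" using assms(1) by (auto simp: ddvd_def)
  have "b * c = a * (k * c)" using k by (simp add: mult.assoc)
  thus ?thesis using k assms(2) unfolding ddvd_def by (intro bexI[of _ "k * c"]) auto
qed
lemma dvd_multl: "ddvd D a b \<Longrightarrow> c \<in> D \<Longrightarrow> ddvd D a (c * b)"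
  using dvd_multr by (simp add: mult.commute)
lemma dvd_self_mult: "a \<in> D \<Longrightarrow> c \<in> D \<Longrightarrow> ddvd D a (a * c)"
  unfolding ddvd_def by blast
lemma dvd_cancel: assumes "s \<noteq> 0" "ddvd D (s * f) (s * a)" shows "ddvd D f a"
proof -
  obtain k where "k \<in> D" "s * a = s * f * k" using assms(2) by (auto simp: ddvd_def)
  hence "a = f * k" using assms(1) by (simp add: mult.assoc)
  thus ?thesis using \<open>k \<in> D\<close> by (auto simp: ddvd_def)
qed
lemma dvd_both: assumes "ddvd D a b" shows "ddvd D (c * a) (c * b)"
proof -
  obtain k where k: "k \<in> D" "b = a * k" using assms(1) by (auto simp: ddvd_def)
  have "c * b = (c * a) * k" using k by (simp add: mult.assoc)
  thus ?thesis using k unfolding ddvd_def by blast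
qed
lemma dvd_zero: "ddvd D a 0" unfolding ddvd_def by (intro bexI[of _ 0]) auto

definition cop :: "'k \<Rightarrow> 'k \<Rightarrow> bool" where
  "cop a b \<longleftrightarrow> (\<forall>c\<in>D. ddvd D c a \<and> ddvd D c b \<longrightarrow> ddvd D c 1)"

lemma cop_sym: "cop a b \<Longrightarrow> cop b a" by (auto simp: cop_def)

lemma gcd_gauss: assumes g: "gcd_domain D" and D: "a \<in> D" "b \<in> D" "s \<in> D" and c: "cop a b"
  and d: "ddvd D b (a * s)" shows "ddvd D b s"
proof (cases "s = 0")
  case True thus ?thesis by (simp add: dvd_zero)
next
  case False
  obtain e where e: "e \<in> D" "ddvd D e (a * s)" "ddvd D e (b * s)"
    "\<forall>c\<in>D. ddvd D c (a * s) \<and> ddvd D c (b * s) \<longrightarrow> ddvd D c e"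
    using g mult[OF D(1) D(3)] mult[OF D(2) D(3)] unfolding gcd_domain_def by blast
  have "ddvd D b (b * s)" using dvd_self_mult[OF D(2,3)] .
  hence be: "ddvd D b e" using e(4) d D by blast
  have "ddvd D s (s * a)" "ddvd D s (s * b)" using dvd_self_mult[OF D(3) D(1)] dvd_self_mult[OF D(3) D(2)] .
  hence "ddvd D s (a * s)" "ddvd D s (b * s)" by (simp_all add: mult.commute)
  hence "ddvd D s e" using e(4) D by blast
  then obtain f where f: "f \<in> D" "e = s * f" by (auto simp: ddvd_def)
  have "ddvd D f a" using dvd_cancel[OF False] e(2) f(2) by (simp add: mult.commute)
  moreover have "ddvd D f b" using dvd_cancel[OF False] e(3) f(2) by (simp add: mult.commute)
  ultimately have "ddvd D f 1" using c f(1) by (auto simp: cop_def)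
  hence "ddvd D e s" using dvd_both[of f 1 s] f(2) by (simp add: mult.commute)
  thus ?thesis using dvd_trans' be by blast
qed

lemma gcd_quot: assumes g: "gcd_domain D" and D: "a \<in> D" "b \<in> D" "b \<noteq> 0"
  obtains d a' b' where "d \<in> D" "d \<noteq> 0" "a' \<in> D" "b' \<in> D" "a = d * a'" "b = d * b'" "cop a' b'"
proof -
  obtain d where d: "d \<in> D" "ddvd D d a" "ddvd D d b" "\<forall>c\<in>D. ddvd D c a \<and> ddvd D c b \<longrightarrow> ddvd D c d"
    using g D unfolding gcd_domain_def by blast
  obtain a' b' where ab: "a' \<in> D" "b' \<in> D" "a = d * a'" "b = d * b'" using d(2,3) by (auto simp: ddvd_def)
  have d0: "d \<noteq> 0" using ab(4) D(3) by auto
  have "cop a' b'" unfolding cop_def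
  proof (intro ballI impI)
    fix c assume c: "c \<in> D" "ddvd D c a' \<and> ddvd D c b'"
    have "ddvd D (d * c) a" "ddvd D (d * c) b" using dvd_both c ab by auto
    hence "ddvd D (d * c) (d * 1)" using d(4) c(1) d(1) by auto
    thus "ddvd D c 1" using dvd_cancel[OF d0] by blast
  qed
  thus ?thesis using that d(1) d0 ab by blast
qed



end



locale conv = star +
  assumes gcd: "gcd_domain D" and irkt: "star_IRKT D st"
begin

lemma val: "maximal_star_ideal D st Q \<Longrightarrow> valuation_dom (localization D Q)"
  using irkt by (simp add: star_IRKT_def)
lemma fin: "x \<in> D \<Longrightarrow> x \<noteq> 0 \<Longrightarrow> finite {P. maximal_star_ideal D st P \<and> x \<in> P}"
  using irkt by (simp add: star_IRKT_def)
lemma indep: "maximal_star_ideal D st P \<Longrightarrow> maximal_star_ideal D st Q \<Longrightarrow> P \<noteq> Q \<Longrightarrow>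
    prime_ideal D R \<Longrightarrow> R \<noteq> {0} \<Longrightarrow> \<not> (R \<subseteq> P \<and> R \<subseteq> Q)"
  using irkt unfolding star_IRKT_def by blast

lemma max_nz_out: "maximal_star_ideal D st Q \<Longrightarrow> t \<notin> Q \<Longrightarrow> t \<noteq> 0"
  using sub_0[OF max_sub] by blast

lemma loc_D: assumes "maximal_star_ideal D st Q" "a \<in> D" shows "a \<in> localization D Q"
  using locI[OF assms(2) one max_one[OF assms(1)], of a] by simp

lemma locE: assumes "v \<in> localization D Q"
  obtains c t where "c \<in> D" "t \<in> D" "t \<notin> Q" "v = c / t"
  using assms unfolding localization_def by blast

lemma loc_mult: assumes Q: "maximal_star_ideal D st Q" and v: "v \<in> localization D Q" and w: "w \<in> localization D Q"
  shows "v * w \<in> localization D Q"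
proof -
  obtain a s where a: "a \<in> D" "s \<in> D" "s \<notin> Q" "v = a / s" using v by (rule locE)
  obtain b t where b: "b \<in> D" "t \<in> D" "t \<notin> Q" "w = b / t" using w by (rule locE)
  have "s * t \<notin> Q" using max_prime[OF Q a(2) b(2)] a(3) b(3) by blast
  moreover have "v * w = (a * b) / (s * t)" using a b by simp
  ultimately show ?thesis using locI a b by blast
qed

lemma loc_add: assumes Q: "maximal_star_ideal D st Q" and v: "v \<in> localization D Q" and w: "w \<in> localization D Q"
  shows "v + w \<in> localization D Q"
proof -
  obtain a s where a: "a \<in> D" "s \<in> D" "s \<notin> Q" "v = a / s" using v by (rule locE)
  obtain b t where b: "b \<in> D" "t \<in> D" "t \<notin> Q" "w = b / t" using w by (rule locE)
  have st: "s * t \<notin> Q" using max_prime[OF Q a(2) b(2)] a(3) b(3) by blast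
  have s0: "s \<noteq> 0" "t \<noteq> 0" using max_nz_out[OF Q] a(3) b(3) by auto
  have "v + w = (a * t + b * s) / (s * t)" using a b s0 by (simp add: field_simps)
  moreover have "a * t + b * s \<in> D" using a b by auto
  ultimately show ?thesis using locI st a b by blast
qed

lemma loc_power: "maximal_star_ideal D st Q \<Longrightarrow> v \<in> localization D Q \<Longrightarrow> v ^ n \<in> localization D Q"
  by (induction n) (auto intro: loc_mult loc_D)

lemma xV_mult: assumes "maximal_star_ideal D st Q" "y \<in> smul x (localization D Q)" "v \<in> localization D Q"
  shows "y * v \<in> smul x (localization D Q)"
proof -
  obtain w where w: "w \<in> localization D Q" "y = x * w" using assms(2) by (auto simp: smul_def)
  have e: "y * v = x * (w * v)" using w(2) by (simp add: mult.assoc)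
  show ?thesis unfolding e by (rule smul_mem[OF loc_mult[OF assms(1) w(1) assms(3)]])
qed

lemma two_elem: assumes ab: "a \<in> D" "b \<in> D" "b \<noteq> 0" "cop a b" shows "st (dspan D {a, b}) = D"
proof (rule ccontr)
  assume ne: "st (dspan D {a, b}) \<noteq> D"
  note ok = ok2[OF ab(1-3)]
  obtain P where P: "maximal_star_ideal D st P" "st (dspan D {a, b}) \<subseteq> P"
    using zorn[OF T_star[OF ok] T_int[OF ok] ne] by blast
  have aP: "a \<in> P" and bP: "b \<in> P" using T_incl[OF ok] P(2) by auto
  show False
  proof (cases "a = 0")
    case True
    have "ddvd D b 1" using ab(4) ab(2) True dvd_zero dvd_refl'[OF ab(2)] by (auto simp: cop_def)
    then obtain k where "k \<in> D" "1 = b * k" by (auto simp: ddvd_def)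
    hence "1 \<in> P" using max_mult[OF P(1) bP] by metis
    thus False using max_one[OF P(1)] by simp
  next
    case False
    have "a / b \<noteq> 0" using False ab(3) by simp
    hence "a / b \<in> localization D P \<or> inverse (a / b) \<in> localization D P"
      using val[OF P(1)] unfolding valuation_dom_def by blast
    thus False
    proof
      assume "a / b \<in> localization D P"
      then obtain c s where cs: "c \<in> D" "s \<in> D" "s \<notin> P" "a / b = c / s" by (rule locE)
      have s0: "s \<noteq> 0" using max_nz_out[OF P(1) cs(3)] .
      have "a * s = b * c" using cs(4) s0 ab(3) by (simp add: field_simps)
      hence "ddvd D b (a * s)" using cs(1) by (auto simp: ddvd_def)
      hence "ddvd D b s" using gcd_gauss[OF gcd ab(1,2) cs(2) ab(4)] by simp
      then obtain k where "k \<in> D" "s = b * k" by (auto simp: ddvd_def)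
      hence "s \<in> P" using max_mult[OF P(1) bP] by simp
      thus False using cs(3) by simp
    next
      assume "inverse (a / b) \<in> localization D P"
      hence "b / a \<in> localization D P" by simp
      then obtain c s where cs: "c \<in> D" "s \<in> D" "s \<notin> P" "b / a = c / s" by (rule locE)
      have s0: "s \<noteq> 0" using max_nz_out[OF P(1) cs(3)] .
      have "b * s = a * c" using cs(4) s0 False by (simp add: field_simps)
      hence "ddvd D a (b * s)" using cs(1) by (auto simp: ddvd_def)
      hence "ddvd D a s" using gcd_gauss[OF gcd ab(2,1) cs(2) cop_sym[OF ab(4)]] by simp
      then obtain k where "k \<in> D" "s = a * k" by (auto simp: ddvd_def)
      hence "s \<in> P" using max_mult[OF P(1) aP] by simp
      thus False using cs(3) by simp
    qed
  qed
qed

lemma two_princ: assumes "a \<in> D" "b \<in> D" "b \<noteq> 0"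
  obtains d where "d \<in> D" "d \<noteq> 0" "st (dspan D {a, b}) = smul d D"
proof -
  obtain d a' b' where r: "d \<in> D" "d \<noteq> 0" "a' \<in> D" "b' \<in> D" "a = d * a'" "b = d * b'" "cop a' b'"
    using gcd_quot[OF gcd assms] by blast
  have b0: "b' \<noteq> 0" using r assms(3) by auto
  have "st (dspan D {a', b'}) = D" using two_elem[OF r(3,4) b0 r(7)] .
  moreover have "smul d (st (dspan D {a', b'})) = st (dspan D {a, b})"
    using T_smul[OF r(2) ok2[OF r(3,4) b0]] r by simp
  ultimately show ?thesis using that r(1,2) by simp
qed

lemma zero_set_dspan: assumes "\<forall>s\<in>S. s = 0" shows "dspan D S \<subseteq> {0}"
proof (rule dspan_least)
  show "dsubmodule D {0}" by (simp add: dsubmodule_def)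
qed (use assms in auto)

lemma T_principal_all: assumes "finite S" shows "S \<subseteq> D \<longrightarrow> ok S \<longrightarrow> (\<exists>d\<in>D. d \<noteq> 0 \<and> st (dspan D S) = smul d D)"
  using assms
proof (induction S rule: finite_induct)
  case empty thus ?case by (simp add: ok_def)
next
  case (insert a S)
  show ?case
  proof (intro impI)
    assume SD: "insert a S \<subseteq> D" and okS: "ok (insert a S)"
    have aD: "a \<in> D" and SD': "S \<subseteq> D" using SD by auto
    show "\<exists>d\<in>D. d \<noteq> 0 \<and> st (dspan D (insert a S)) = smul d D"
    proof (cases "ok S")
      case True
      then obtain g where g: "g \<in> D" "g \<noteq> 0" "st (dspan D S) = smul g D" using insert.IH SD' by blast
      have ok2': "ok {a, g}" using ok2[OF aD g(1,2)] .
      have gin: "g \<in> st (dspan D {a, g})" using T_incl[OF ok2'] by simp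
      have ain: "a \<in> st (dspan D {a, g})" using T_incl[OF ok2'] by simp
      have "S \<subseteq> smul g D" using T_incl[OF True] g(3) by simp
      moreover have "smul g D \<subseteq> st (dspan D {a, g})"
        using principal_sub[OF st_sub[OF ok_frac[OF ok2']]] gin by simp
      ultimately have "insert a S \<subseteq> st (dspan D {a, g})" using ain by blast
      hence le: "st (dspan D (insert a S)) \<subseteq> st (dspan D {a, g})" using T_mono[OF okS ok2'] by simp
      have "S \<subseteq> st (dspan D (insert a S))" using T_incl[OF okS] by blast
      hence "st (dspan D S) \<subseteq> st (dspan D (insert a S))" using T_mono[OF True okS] by simp
      hence "g \<in> st (dspan D (insert a S))" using g(3) smul_D_mem by blast
      moreover have "a \<in> st (dspan D (insert a S))" using T_incl[OF okS] by blast
      ultimately have "{a, g} \<subseteq> st (dspan D (insert a S))" by simp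
      hence "st (dspan D {a, g}) \<subseteq> st (dspan D (insert a S))" using T_mono[OF ok2' okS] by simp
      hence eq: "st (dspan D (insert a S)) = st (dspan D {a, g})" using le by blast
      obtain d where "d \<in> D" "d \<noteq> 0" "st (dspan D {a, g}) = smul d D" using two_princ[OF aD g(1,2)] by blast
      thus ?thesis using eq by blast
    next
      case False
      hence z: "\<forall>s\<in>S. s = 0" using SD' by (auto simp: ok_def)
      hence a0: "a \<noteq> 0" using okS by (auto simp: ok_def)
      have "insert a S \<subseteq> smul a D" using z smul_D_mem sub_0[OF smul_sub[OF D_sub]] by auto
      hence "st (dspan D (insert a S)) \<subseteq> smul a D" using T_least[OF okS star_ideal_princ[OF a0]] by simp
      moreover have "a \<in> st (dspan D (insert a S))" using T_incl[OF okS] by blast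
      hence "smul a D \<subseteq> st (dspan D (insert a S))" using principal_sub[OF st_sub[OF ok_frac[OF okS]]] by simp
      ultimately show ?thesis using aD a0 by blast
    qed
  qed
qed

lemma GP_conv: GP
  unfolding GP_def
proof (intro allI impI)
  fix J assume J: "star_fin_type D st J"
  obtain J0 where J0: "frac_ideal D J0" "fin_gen D J0" "J = st J0" using J by (auto simp: star_fin_type_def)
  obtain F where F: "finite F" "J0 = dspan D F" using J0(2) by (auto simp: fin_gen_def)
  obtain d where d: "d \<in> D" "d \<noteq> 0" "smul d J0 \<subseteq> D" using J0(1) by (auto simp: frac_ideal_def)
  define F' where "F' = (\<lambda>y. d * y) ` F"
  have e: "smul d J0 = dspan D F'" using dspan_smul[OF d(2)] F(2) by (simp add: F'_def)
  have F'D: "F' \<subseteq> D"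
  proof
    fix z assume "z \<in> F'" then obtain f where f: "f \<in> F" "z = d * f" by (auto simp: F'_def)
    have "f \<in> J0" using F(2) dspan_incl f(1) by blast
    hence "d * f \<in> smul d J0" by (rule smul_mem)
    thus "z \<in> D" using d(3) f(2) by blast
  qed
  have "\<not> (\<forall>s\<in>F. s = 0)"
  proof
    assume "\<forall>s\<in>F. s = 0"
    hence "J0 \<subseteq> {0}" using zero_set_dspan F(2) by simp
    thus False using J0(1) by (auto simp: frac_ideal_def dsubmodule_def)
  qed
  then obtain f where f: "f \<in> F" "f \<noteq> 0" by blast
  have okF': "ok F'" using F'D f d(2) by (intro okI[of _ "d * f"]) (auto simp: F'_def)
  obtain e' where e': "e' \<in> D" "e' \<noteq> 0" "st (dspan D F') = smul e' D"
    using T_principal_all[of F'] F(1) F'D okF' by (auto simp: F'_def)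
  have "smul d J = smul e' D" using st_smul[OF d(2) J0(1)] J0(3) e e'(3) by simp
  hence "J = smul (inverse d) (smul e' D)" using smul_inv[OF d(2), of J] by simp
  also have "\<dots> = smul (inverse d * e') D" by (simp add: smul_smul)
  finally show "principal D J" unfolding principal_def using d(2) e'(2) by (intro exI[of _ "inverse d * e'"]) auto
qed

end


context conv begin

lemma max_power: assumes "maximal_star_ideal D st P" "r \<in> D" "r ^ m \<in> P" shows "r \<in> P"
  using assms(3)
proof (induction m)
  case 0 thus ?case using max_one[OF assms(1)] by simp
next
  case (Suc m)
  thus ?case using max_prime[OF assms(1) assms(2) power[OF assms(2), of m]] by auto
qed

lemma sep: assumes P: "maximal_star_ideal D st P" and Q: "maximal_star_ideal D st Q" and PQ: "P \<noteq> Q"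
  and x: "x \<in> D" "x \<noteq> 0" "x \<in> Q"
  shows "\<exists>s\<in>D. s \<notin> P \<and> s \<in> smul x (localization D Q)"
proof -
  define V where "V = localization D Q"
  define R where "R = {r \<in> D. \<exists>m. r ^ m \<in> smul x V}"
  have VD: "d \<in> V" if "d \<in> D" for d using loc_D[OF Q that] by (simp add: V_def)
  have xVm: "y * v \<in> smul x V" if "y \<in> smul x V" "v \<in> V" for y v
    using xV_mult[OF Q] that by (simp add: V_def)
  have Vm: "v * w \<in> V" if "v \<in> V" "w \<in> V" for v w using loc_mult[OF Q] that by (simp add: V_def)
  have Va: "v + w \<in> V" if "v \<in> V" "w \<in> V" for v w using loc_add[OF Q] that by (simp add: V_def)
  have Vp: "v ^ n \<in> V" if "v \<in> V" for v n using loc_power[OF Q] that by (simp add: V_def)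
  have zxV: "0 \<in> smul x V" using smul_mem[OF VD[OF zero], of x] by simp
  have xxV: "x \<in> smul x V" using smul_mem[OF VD[OF one], of x] by simp
  have one_not: "1 \<notin> smul x V"
  proof
    assume "1 \<in> smul x V"
    then obtain v where v: "v \<in> V" "1 = x * v" by (auto simp: smul_def)
    obtain c t where ct: "c \<in> D" "t \<in> D" "t \<notin> Q" "v = c / t" using v(1) unfolding V_def by (rule locE)
    have t0: "t \<noteq> 0" using max_nz_out[OF Q ct(3)] .
    have "t = x * c" using v(2) ct(4) t0 by (simp add: field_simps)
    hence "t \<in> Q" using max_mult[OF Q x(3) ct(1)] by simp
    thus False using ct(3) by simp
  qed
  have RD: "R \<subseteq> D" by (auto simp: R_def)
  have Rint: "y \<in> R" if "y \<in> D" "y ^ m \<in> smul x V" for y m using that unfolding R_def by blast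
  have R0: "0 \<in> R" using Rint[OF zero, of 1] zxV by simp
  have Rx: "x \<in> R" using Rint[OF x(1), of 1] xxV by simp
  have R1: "1 \<notin> R" using one_not by (auto simp: R_def)
  have Rmul: "d * r \<in> R" if A: "d \<in> D" "r \<in> R" for d r
  proof -
    obtain m where m: "r \<in> D" "r ^ m \<in> smul x V" using A(2) by (auto simp: R_def)
    have "(d * r) ^ m = r ^ m * d ^ m" by (simp add: power_mult_distrib mult.commute)
    moreover have "r ^ m * d ^ m \<in> smul x V" using xVm[OF m(2) VD[OF power[OF A(1)]]] .
    ultimately have "(d * r) ^ m \<in> smul x V" by simp
    thus ?thesis using Rint A(1) m(1) by blast
  qed
  have cmp: "r2 / r1 \<in> V \<or> r1 / r2 \<in> V" if "r1 \<noteq> 0" "r2 \<noteq> 0" for r1 r2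
  proof -
    have "r2 / r1 \<noteq> 0" using that by simp
    hence "r2 / r1 \<in> V \<or> inverse (r2 / r1) \<in> V" using val[OF Q] unfolding valuation_dom_def V_def by blast
    thus ?thesis by simp
  qed
  have addlem: "r1 + r2 \<in> R" if A: "r1 \<in> R" "r2 \<in> R" "r2 / r1 \<in> V" "r1 \<noteq> 0" for r1 r2
  proof -
    obtain m where m: "r1 \<in> D" "r1 ^ m \<in> smul x V" using A(1) by (auto simp: R_def)
    have r2D: "r2 \<in> D" using A(2) by (auto simp: R_def)
    have "r1 + r2 = r1 * (1 + r2 / r1)" using A(4) by (simp add: field_simps)
    hence "(r1 + r2) ^ m = r1 ^ m * (1 + r2 / r1) ^ m" by (simp add: power_mult_distrib)
    moreover have "(1 + r2 / r1) ^ m \<in> V" using Vp Va VD[OF one] A(3) by blast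
    ultimately have "(r1 + r2) ^ m \<in> smul x V" using xVm[OF m(2)] by simp
    thus ?thesis using Rint m(1) r2D by blast
  qed
  have Radd: "r1 + r2 \<in> R" if "r1 \<in> R" "r2 \<in> R" for r1 r2
  proof (cases "r1 = 0 \<or> r2 = 0")
    case True thus ?thesis using that by auto
  next
    case False
    thus ?thesis using cmp[of r1 r2] addlem[OF that] addlem[OF that(2,1)] by (auto simp: add.commute)
  qed
  have primelem: "r2 \<in> R" if A: "r1 * r2 \<in> R" "r1 \<in> D" "r2 \<in> D" "r2 / r1 \<in> V" "r1 \<noteq> 0" for r1 r2
  proof -
    obtain m where m: "(r1 * r2) ^ m \<in> smul x V" using A(1) by (auto simp: R_def)
    have "r2 ^ (2 * m) = (r1 * r2) ^ m * (r2 / r1) ^ m"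
      using A(5) by (simp add: power_mult_distrib power_mult field_simps power2_eq_square)
    moreover have "(r1 * r2) ^ m * (r2 / r1) ^ m \<in> smul x V" using xVm[OF m Vp[OF A(4)]] .
    ultimately have "r2 ^ (2 * m) \<in> smul x V" by simp
    thus ?thesis using Rint A(3) by blast
  qed
  have Rprime: "r1 \<in> R \<or> r2 \<in> R" if "r1 \<in> D" "r2 \<in> D" "r1 * r2 \<in> R" for r1 r2
  proof (cases "r1 = 0 \<or> r2 = 0")
    case True thus ?thesis using R0 by auto
  next
    case False
    thus ?thesis using cmp[of r1 r2] primelem[OF that(3,1,2)] primelem[of r2 r1] that by (auto simp: mult.commute)
  qed
  have Rsub: "dsubmodule D R" unfolding dsubmodule_def using R0 Radd Rmul by blast
  have pR: "prime_ideal D R" unfolding prime_ideal_def using RD Rsub R1 Rprime by auto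
  have Rn0: "R \<noteq> {0}" using Rx x(2) by auto
  have RQ: "R \<subseteq> Q"
  proof
    fix r assume "r \<in> R"
    then obtain m where m: "r \<in> D" "r ^ m \<in> smul x V" by (auto simp: R_def)
    obtain v where v: "v \<in> V" "r ^ m = x * v" using m(2) by (auto simp: smul_def)
    obtain c t where ct: "c \<in> D" "t \<in> D" "t \<notin> Q" "v = c / t" using v(1) unfolding V_def by (rule locE)
    have t0: "t \<noteq> 0" using max_nz_out[OF Q ct(3)] .
    have "r ^ m * t = x * c" using v(2) ct(4) t0 by (simp add: field_simps)
    hence "r ^ m * t \<in> Q" using max_mult[OF Q x(3) ct(1)] by simp
    hence "r ^ m \<in> Q" using max_prime[OF Q power[OF m(1)] ct(2)] ct(3) by blast
    thus "r \<in> Q" using max_power[OF Q m(1)] by blast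
  qed
  have "\<not> R \<subseteq> P" using indep[OF P Q PQ pR Rn0] RQ by blast
  then obtain r where r: "r \<in> R" "r \<notin> P" by blast
  obtain m where m: "r \<in> D" "r ^ m \<in> smul x V" using r(1) by (auto simp: R_def)
  have "r ^ m \<notin> P" using max_power[OF P m(1)] r(2) by blast
  thus ?thesis using m power[OF m(1)] by (auto simp: V_def)
qed

lemma mult_sep: assumes "finite A" "maximal_star_ideal D st P1" "x \<in> D" "x \<noteq> 0"
  shows "(\<forall>Q\<in>A. maximal_star_ideal D st Q \<and> Q \<noteq> P1 \<and> x \<in> Q) \<longrightarrow>
    (\<exists>s\<in>D. s \<notin> P1 \<and> (\<forall>Q\<in>A. s \<in> smul x (localization D Q)))"
  using assms(1)
proof (induction A rule: finite_induct)
  case empty thus ?case using max_one[OF assms(2)] by (intro impI bexI[of _ 1]) auto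
next
  case (insert Q A)
  show ?case
  proof
    assume H: "\<forall>Q'\<in>insert Q A. maximal_star_ideal D st Q' \<and> Q' \<noteq> P1 \<and> x \<in> Q'"
    then obtain s where s: "s \<in> D" "s \<notin> P1" "\<forall>Q\<in>A. s \<in> smul x (localization D Q)" using insert.IH by blast
    have HQ: "maximal_star_ideal D st Q" "Q \<noteq> P1" "x \<in> Q" using H by auto
    obtain sq where sq: "sq \<in> D" "sq \<notin> P1" "sq \<in> smul x (localization D Q)"
      using sep[OF assms(2) HQ(1) HQ(2)[symmetric] assms(3,4) HQ(3)] by blast
    have "s * sq \<notin> P1" using max_prime[OF assms(2) s(1) sq(1)] s(2) sq(2) by blast
    moreover have "s * sq \<in> D" using s(1) sq(1) by auto
    moreover have "s * sq \<in> smul x (localization D Q')" if "Q' \<in> insert Q A" for Q'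
    proof (cases "Q' = Q")
      case True
      have "sq * s \<in> smul x (localization D Q)" using xV_mult[OF HQ(1) sq(3) loc_D[OF HQ(1) s(1)]] .
      thus ?thesis using True by (simp add: mult.commute)
    next
      case False
      hence Q': "Q' \<in> A" using that by simp
      have "maximal_star_ideal D st Q'" using H Q' by blast
      thus ?thesis using xV_mult[OF _ s(3)[rule_format, OF Q'] loc_D[OF _ sq(1)]] by blast
    qed
    ultimately show "\<exists>s\<in>D. s \<notin> P1 \<and> (\<forall>Q\<in>insert Q A. s \<in> smul x (localization D Q))" by blast
  qed
qed

end


context conv begin

lemma construct: "\<forall>x. x \<in> D \<and> x \<noteq> 0 \<and> \<not> dunit D x \<and> card {P. maximal_star_ideal D st P \<and> x \<in> P} = n \<longrightarrow>
  (\<exists>ys. ys \<noteq> [] \<and> (\<forall>y\<in>set ys. sm y) \<and> prod_list ys = x)"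
proof (induction n rule: less_induct)
  case (less n)
  show ?case
  proof (intro allI impI, elim conjE)
    fix x assume x: "x \<in> D" "x \<noteq> 0" "\<not> dunit D x" and cn: "card {P. maximal_star_ideal D st P \<and> x \<in> P} = n"
    define Mx where "Mx = {P. maximal_star_ideal D st P \<and> x \<in> P}"
    have finM: "finite Mx" using fin[OF x(1,2)] by (simp add: Mx_def)
    obtain P1 where P1: "maximal_star_ideal D st P1" "x \<in> P1" using max_elem[OF x] by blast
    have P1M: "P1 \<in> Mx" using P1 by (simp add: Mx_def)
    show "\<exists>ys. ys \<noteq> [] \<and> (\<forall>y\<in>set ys. sm y) \<and> prod_list ys = x"
    proof (cases "Mx = {P1}")
      case True
      have u: "P = Q" if "maximal_star_ideal D st P" "maximal_star_ideal D st Q" "x \<in> P" "x \<in> Q" for P Q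
      proof -
        have "P \<in> Mx" "Q \<in> Mx" using that by (simp_all add: Mx_def)
        thus ?thesis using True by blast
      qed
      have "sm x" unfolding sm_def uniq_def using x(1,2) P1 u by blast
      thus ?thesis by (intro exI[of _ "[x]"]) auto
    next
      case False
      define rest where "rest = Mx - {P1}"
      have restne: "rest \<noteq> {}" using False P1M by (auto simp: rest_def)
      have finR: "finite rest" using finM by (simp add: rest_def)
      have restP: "\<forall>Q\<in>rest. maximal_star_ideal D st Q \<and> Q \<noteq> P1 \<and> x \<in> Q" by (auto simp: rest_def Mx_def)
      obtain s where s: "s \<in> D" "s \<notin> P1" "\<forall>Q\<in>rest. s \<in> smul x (localization D Q)"
        using mult_sep[OF finR P1(1) x(1,2)] restP by blast
      have s0: "s \<noteq> 0" using max_nz_out[OF P1(1) s(2)] .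
      obtain g a b where r: "g \<in> D" "g \<noteq> 0" "a \<in> D" "b \<in> D" "x = g * a" "s = g * b" "cop a b"
        using gcd_quot[OF gcd x(1) s(1) s0] by blast
      have b0: "b \<noteq> 0" using r(6) s0 by auto
      have a0: "a \<noteq> 0" using r(5) x(2) by auto
      have cab: "st (dspan D {a, b}) = D" using two_elem[OF r(3,4) b0 r(7)] .
      have gP1: "g \<notin> P1"
      proof
        assume "g \<in> P1" hence "s \<in> P1" using max_mult[OF P1(1) _ r(4)] r(6) by simp
        thus False using s(2) by simp
      qed
      have aP1: "a \<in> P1" using max_prime[OF P1(1) r(1,3)] r(5) P1(2) gP1 by auto
      have aQ: "a \<notin> Q" if Q: "Q \<in> rest" for Q
      proof
        assume aQ: "a \<in> Q"
        have MQ: "maximal_star_ideal D st Q" using restP Q by blast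
        obtain v where v: "v \<in> localization D Q" "s = x * v" using s(3) Q by (auto simp: smul_def)
        obtain c t where ct: "c \<in> D" "t \<in> D" "t \<notin> Q" "v = c / t" using v(1) by (rule locE)
        have t0: "t \<noteq> 0" using max_nz_out[OF MQ ct(3)] .
        have "g * b * t = g * a * c" using v(2) ct(4) r(5,6) t0 by (simp add: field_simps)
        hence "b * t = a * c" using r(2) by (simp add: mult.assoc)
        moreover have "a * c \<in> Q" using max_mult[OF MQ aQ ct(1)] .
        ultimately have "b * t \<in> Q" by simp
        hence "b \<in> Q" using max_prime[OF MQ r(4) ct(2)] ct(3) by blast
        thus False using T2_not_both[OF cab ok2[OF r(3,4) b0] MQ aQ] by simp
      qed
      have sma: "sm a"
        unfolding sm_def uniq_def
      proof (intro conjI)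
        show "a \<in> D" "a \<noteq> 0" using r(3) a0 by auto
        show "\<exists>P. maximal_star_ideal D st P \<and> a \<in> P" using P1(1) aP1 by blast
        have "P = P1" if "maximal_star_ideal D st P" "a \<in> P" for P
        proof -
          have "x \<in> P" using max_mult[OF that(1) that(2) r(1)] r(5) by (simp add: mult.commute)
          hence "P \<in> Mx" using that(1) by (simp add: Mx_def)
          show ?thesis
          proof (rule ccontr)
            assume "P \<noteq> P1" hence "P \<in> rest" using \<open>P \<in> Mx\<close> by (simp add: rest_def)
            thus False using aQ that(2) by blast
          qed
        qed
        thus "\<forall>P Q. maximal_star_ideal D st P \<and> maximal_star_ideal D st Q \<and> a \<in> P \<and> a \<in> Q \<longrightarrow> P = Q"
          by blast
      qed
      have Mg: "{P. maximal_star_ideal D st P \<and> g \<in> P} = rest"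
      proof (intro set_eqI iffI)
        fix P assume "P \<in> {P. maximal_star_ideal D st P \<and> g \<in> P}"
        hence P: "maximal_star_ideal D st P" "g \<in> P" by auto
        have "x \<in> P" using max_mult[OF P r(3)] r(5) by simp
        moreover have "P \<noteq> P1" using gP1 P(2) by auto
        ultimately show "P \<in> rest" using P(1) by (simp add: rest_def Mx_def)
      next
        fix Q assume Q: "Q \<in> rest"
        have MQ: "maximal_star_ideal D st Q" "x \<in> Q" using restP Q by auto
        have "g \<in> Q" using max_prime[OF MQ(1) r(1,3)] MQ(2) r(5) aQ[OF Q] by auto
        thus "Q \<in> {P. maximal_star_ideal D st P \<and> g \<in> P}" using MQ(1) by simp
      qed
      obtain Q0 where Q0: "Q0 \<in> rest" using restne by blast
      have gnu: "\<not> dunit D g"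
      proof
        assume "dunit D g"
        moreover have "g \<in> Q0" "maximal_star_ideal D st Q0" using Mg Q0 by auto
        ultimately show False using max_unit by blast
      qed
      have "card rest < card Mx" unfolding rest_def by (rule card_Diff1_less[OF finM P1M])
      hence lt: "card rest < n" using cn by (simp add: Mx_def)
      have IH: "\<forall>x. x \<in> D \<and> x \<noteq> 0 \<and> \<not> dunit D x \<and> card {P. maximal_star_ideal D st P \<and> x \<in> P} = card rest \<longrightarrow>
          (\<exists>ys. ys \<noteq> [] \<and> (\<forall>y\<in>set ys. sm y) \<and> prod_list ys = x)" by (rule less.IH[OF lt])
      have "g \<in> D \<and> g \<noteq> 0 \<and> \<not> dunit D g \<and> card {P. maximal_star_ideal D st P \<and> g \<in> P} = card rest"
        using r(1,2) gnu Mg by simp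
      then obtain ys where ys: "ys \<noteq> []" "\<forall>y\<in>set ys. sm y" "prod_list ys = g"
        using IH by blast
      show ?thesis using ys sma r(5) by (intro exI[of _ "a # ys"]) auto
    qed
  qed
qed

lemma converse: "\<forall>x\<in>D. x \<noteq> 0 \<and> smul x D \<noteq> D \<longrightarrow> star_prod_fhomog D st x"
proof (intro ballI impI, elim conjE)
  fix x assume x: "x \<in> D" "x \<noteq> 0" "smul x D \<noteq> D"
  have nu: "\<not> dunit D x" using unit_iff[OF x(1,2)] x(3) by simp
  obtain ys where ys: "ys \<noteq> []" "\<forall>y\<in>set ys. sm y" "prod_list ys = x" using construct x nu by blast
  define Is where "Is = map (\<lambda>y. smul y D) ys"
  have "\<forall>I\<in>set Is. star_f_homog D st I"
    unfolding Is_def using sm_fh[OF GP_conv] ys(2) by (auto simp: star_f_homog_elem_def)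
  moreover have "smul x D = st (iprod_list D Is)"
    unfolding Is_def iprod_list_principal ys(3) using st_princ[OF x(2)] by simp
  ultimately show "star_prod_fhomog D st x" unfolding star_prod_fhomog_def by blast
qed

end

theorem theoremS2:
  fixes D :: "'k::field set" and st :: "'k set \<Rightarrow> 'k set"
  assumes "domain_in D" and "star_op D st" and "finite_character D st"
  shows "((\<forall>x\<in>D. x \<noteq> 0 \<and> \<not> dunit D x \<longrightarrow> star_prod_fhomog D st x) \<longrightarrow>
            gcd_domain D \<and> star_IRKT D st \<and>
            (\<forall>x\<in>D. x \<noteq> 0 \<and> \<not> dunit D x \<longrightarrow>
               (\<exists>xs. comax_fhomog_fact D st x xs \<and>
                  (\<forall>ys. comax_fhomog_fact D st x ys \<longrightarrow>
                     length ys = length xs \<and>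
                     (\<exists>\<sigma>. bij_betw \<sigma> {..<length xs} {..<length xs} \<and>
                        (\<forall>i<length xs. dassoc D (xs ! i) (ys ! \<sigma> i)))))))
       \<and> (gcd_domain D \<and> star_IRKT D st \<longrightarrow>
            (\<forall>x\<in>D. x \<noteq> 0 \<and> smul x D \<noteq> D \<longrightarrow> star_prod_fhomog D st x))"
proof -
  interpret star D st using assms by (unfold_locales) auto
  have A: "(\<forall>x\<in>D. x \<noteq> 0 \<and> \<not> dunit D x \<longrightarrow> star_prod_fhomog D st x) \<longrightarrow>
            gcd_domain D \<and> star_IRKT D st \<and>
            (\<forall>x\<in>D. x \<noteq> 0 \<and> \<not> dunit D x \<longrightarrow>
               (\<exists>xs. comax_fhomog_fact D st x xs \<and>
                  (\<forall>ys. comax_fhomog_fact D st x ys \<longrightarrow>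
                     length ys = length xs \<and>
                     (\<exists>\<sigma>. bij_betw \<sigma> {..<length xs} {..<length xs} \<and>
                        (\<forall>i<length xs. dassoc D (xs ! i) (ys ! \<sigma> i))))))"
    using forward by blast
  have B: "gcd_domain D \<and> star_IRKT D st \<longrightarrow>
            (\<forall>x\<in>D. x \<noteq> 0 \<and> smul x D \<noteq> D \<longrightarrow> star_prod_fhomog D st x)"
  proof
    assume "gcd_domain D \<and> star_IRKT D st"
    then interpret conv D st by (unfold_locales) auto
    show "\<forall>x\<in>D. x \<noteq> 0 \<and> smul x D \<noteq> D \<longrightarrow> star_prod_fhomog D st x" by (rule converse)
  qed
  show ?thesis using A B by blast
qed



end
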